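(* Let $s\le\ell$ be positive integers and consider the instance of Problem 1 (defined in the context) with these parameters. Let $\Omega_{s,\mathbf{i}}$ ($\mathbf{i}\in\mathcal{I}$) be the unique elements of $\mathcal{R}$ with $\deg_{\mathcal{H}}\Omega_{s,\mathbf{i}}\le\deg_{\mathcal{H}}\Lambda_s+|\mathbf{i}|(2g-1)$ and $\Lambda_s(\mathbf{f}-\mathbf{R})^{\mathbf{i}}=G^{|\mathbf{i}|}\Omega_{s,\mathbf{i}}$. Then $$\lambda_{\mathbf{i}}=\Omega_{s,\mathbf{i}}\ (\mathbf{i}\in\mathcal{I}),\qquad \psi_{\mathbf{j}}=\Lambda_s\mathbf{f}^{\mathbf{j}}\ (\mathbf{j}\in\mathcal{J})$$ is a solution of Problem 1 of degree $\tau=\deg_{\mathcal{H}}\Lambda_s$, where $s|\mathcal{E}|\le\tau\le s|\mathcal{E}|+g$.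
   Context: Let $q$ be a prime power. The Hermitian curve over $\mathbb{F}_{q^2}$ is the smooth projective plane curve with affine equation $Y^q+Y=X^{q+1}$; genus $g=\tfrac12q(q-1)$, affine rational points $P_1,\dots,P_n$ ($n=q^3$), point at infinity $P_\infty$. $\mathcal{R}=\bigcup_{m\ge0}\mathcal{L}(mP_\infty)=\mathbb{F}_{q^2}[X,Y]/(Y^q+Y-X^{q+1})$ with basis $\{X^iY^j:i\ge0,0\le j<q\}$; $\deg_{\mathcal{H}}f=-v_{P_\infty}(f)$, so $\deg_{\mathcal{H}}(X^iY^j)=iq+j(q+1)$; $f\ne0$ is monic if the coefficient of its basis monomial of largest $\deg_{\mathcal{H}}$ is $1$. Fix integers $h\ge1$ and $m_{\mathrm H}$ with $2(g-1)<m_{\mathrm H}<n$. Let $\mathbf{f}=(f_1,\dots,f_h)\in\mathcal{L}(m_{\mathrm H}P_\infty)^h$, $\mathbf{r}=\mathbf{c}+\mathbf{e}\in\mathbb{F}_{q^2}^{h\times n}$ where $\mathbf{c}$ has $i$-th row $(f_i(P_1),\dots,f_i(P_n))$, and $\mathcal{E}$ the set of indices of nonzero columns of $\mathbf{e}$. $\Lambda_s$ is the unique monic element of minimal $\deg_{\mathcal{H}}$ of $\{\Lambda\in\mathcal{R}:v_{P_i}(\Lambda)\ge s\ \forall i\in\mathcal{E}\}$. $\mathbf{R}=(R_1,\dots,R_h)$, $R_i\in\mathcal{R}$, $\deg_{\mathcal{H}}R_i<n+2g$, $R_i(P_j)=r_{i,j}$; $G=X^{q^2}-X$. Vector notation for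 $\mathbf{i},\mathbf{j}\in\mathbb{Z}_{\ge0}^h$: $|\mathbf{i}|=\sum_\mu i_\mu$; $\mathbf{i}\preceq\mathbf{j}$ componentwise; $\mathbf{a}^{\mathbf{i}}=\prod_\mu a_\mu^{i_\mu}$; $\binom{\mathbf{j}}{\mathbf{i}}=\prod_\mu\binom{j_\mu}{i_\mu}$. Problem 1: given $s\le\ell$, let $\mathcal{I}=\{\mathbf{i}\in\mathbb{Z}_{\ge0}^h:|\mathbf{i}|<s\}$, $\mathcal{J}=\{\mathbf{j}\in\mathbb{Z}_{\ge0}^h:1\le|\mathbf{j}|\le\ell\}$, and $A_{\mathbf{i},\mathbf{j}}=\binom{\mathbf{j}}{\mathbf{i}}\mathbf{R}^{\mathbf{j}-\mathbf{i}}G^{|\mathbf{i}|}\in\mathcal{R}$ (which is $0$ when $\mathbf{i}\not\preceq\mathbf{j}$). A solution is a family $\lambda_{\mathbf{i}},\psi_{\mathbf{j}}\in\mathcal{R}$ ($\mathbf{i}\in\mathcal{I},\mathbf{j}\in\mathcal{J}$) with $\lambda_{\mathbf{0}}$ monic such that: $\psi_{\mathbf{j}}=\sum_{\mathbf{i}\in\mathcal{I}}\lambda_{\mathbf{i}}A_{\mathbf{i},\mathbf{j}}$ for $|\mathbf{j}|<s$; $\psi_{\mathbf{j}}\equiv\sum_{\mathbf{i}\in\mathcal{I}}\lambda_{\mathbf{i}}A_{\mathbf{i},\mathbf{j}}\bmod G^s$ for $|\mathbf{j}|\ge s$; $\deg_{\mathcal{H}}\lambda_{\mathbf{0}}\ge\deg_{\mathcal{H}}\lambda_{\mathbf{i}}-|\mathbf{i}|(2g-1)$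 for all $\mathbf{i}\in\mathcal{I}$; $\deg_{\mathcal{H}}\lambda_{\mathbf{0}}\ge\deg_{\mathcal{H}}\psi_{\mathbf{j}}-|\mathbf{j}|m_{\mathrm H}$ for all $\mathbf{j}\in\mathcal{J}$. The degree of a solution is $\deg_{\mathcal{H}}\lambda_{\mathbf{0}}$. *)

theory Defs
  imports "HOL-Computational_Algebra.Computational_Algebra"
begin

text \<open>Elements of F[X][Y] are represented as 'a poly poly: the outer variable is Y,
  the coefficients are polynomials in X.  The ring R = F[X,Y]/(Y^q+Y-X^(q+1)) is
  represented by its reduced representatives, i.e. polynomials of Y-degree < q,
  which correspond exactly to the basis X^i Y^j (i \<ge> 0, 0 \<le> j < q).
  Equalities in R are congruences modulo the Hermitian polynomial.\<close>

type_synonym 'a bpoly = "'a poly poly"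

definition Xp :: "'a::comm_ring_1 bpoly" where "Xp = [: [:0, 1:] :]"
definition Yp :: "'a::comm_ring_1 bpoly" where "Yp = [:0, 1:]"

definition hermH :: "nat \<Rightarrow> 'a::comm_ring_1 bpoly" where
  "hermH q = Yp ^ q + Yp - Xp ^ (q + 1)"

definition inR :: "nat \<Rightarrow> 'a::comm_ring_1 bpoly \<Rightarrow> bool" where
  "inR q p \<longleftrightarrow> degree p < q"

definition heq :: "nat \<Rightarrow> 'a::comm_ring_1 bpoly \<Rightarrow> 'a bpoly \<Rightarrow> bool" where
  "heq q a b \<longleftrightarrow> hermH q dvd (a - b)"

text \<open>The reduced representative (remainder by the monic polynomial hermH q).\<close>
definition hred :: "nat \<Rightarrow> 'a::idom bpoly \<Rightarrow> 'a bpoly" where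
  "hred q p = pseudo_mod p (hermH q)"

definition hcoeff :: "'a::zero bpoly \<Rightarrow> nat \<Rightarrow> nat \<Rightarrow> 'a" where
  "hcoeff p i j = coeff (coeff p j) i"

text \<open>deg_H (X^i Y^j) = i q + j (q+1); deg_H of a nonzero reduced element is the maximum
  over its support.  (Only used for nonzero elements.)\<close>
definition degH :: "nat \<Rightarrow> 'a::zero bpoly \<Rightarrow> int" where
  "degH q p = Max {int (i * q + j * (q + 1)) | i j. hcoeff p i j \<noteq> 0}"

definition monicH :: "nat \<Rightarrow> 'a::{zero,one} bpoly \<Rightarrow> bool" where
  "monicH q p \<longleftrightarrow> p \<noteq> 0 \<and>
     (\<forall>i j. hcoeff p i j \<noteq> 0 \<and> int (i * q + j * (q + 1)) = degH q p \<longrightarrow> hcoeff p i j = 1)"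

text \<open>L(m P_infty): elements of R of deg_H at most m (0 included).\<close>
definition inL :: "nat \<Rightarrow> int \<Rightarrow> 'a::comm_ring_1 bpoly \<Rightarrow> bool" where
  "inL q m p \<longleftrightarrow> inR q p \<and> (p = 0 \<or> degH q p \<le> m)"

definition hpts :: "nat \<Rightarrow> ('a::comm_ring_1 \<times> 'a) set" where
  "hpts q = {(a, b). b ^ q + b = a ^ (q + 1)}"

definition evalH :: "'a::comm_ring_1 bpoly \<Rightarrow> 'a \<times> 'a \<Rightarrow> 'a" where
  "evalH p P = poly (map_poly (\<lambda>c. poly c (fst P)) p) (snd P)"

text \<open>v_P(f) \<ge> s for f in R at the affine point P=(a,b): f lies in m_P^s O_P, where O_P is the
  local ring of R at the maximal ideal M_P = (X-a, Y-b); i.e. there is g with g(P) \<noteq> 0 such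
  that g f \<in> M_P^s in R.  The ideal M_P^s of R is described through its preimage
  (X-a,Y-b)^s + (Y^q+Y-X^(q+1)) in F[X][Y].\<close>
definition val_ge :: "nat \<Rightarrow> 'a::comm_ring_1 \<times> 'a \<Rightarrow> nat \<Rightarrow> 'a bpoly \<Rightarrow> bool" where
  "val_ge q P s f \<longleftrightarrow>
     (\<exists>g c u. evalH g P \<noteq> 0 \<and>
        g * f = (\<Sum>k\<le>s. c k * (Xp - [:[:fst P:]:]) ^ k * (Yp - [:[:snd P:]:]) ^ (s - k))
                + u * hermH q)"

definition Gp :: "nat \<Rightarrow> 'a::comm_ring_1 bpoly" where
  "Gp q = Xp ^ (q ^ 2) - Xp"

text \<open>Multi-indices in Z_{\<ge>0}^h, represented as functions nat \<Rightarrow> nat vanishing from h on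
  (components indexed 0..h-1).\<close>
definition mvecs :: "nat \<Rightarrow> (nat \<Rightarrow> nat) set" where
  "mvecs h = {i. \<forall>\<mu>\<ge>h. i \<mu> = 0}"

definition mabs :: "nat \<Rightarrow> (nat \<Rightarrow> nat) \<Rightarrow> nat" where
  "mabs h i = (\<Sum>\<mu><h. i \<mu>)"

definition mpow :: "nat \<Rightarrow> (nat \<Rightarrow> 'a::comm_ring_1 bpoly) \<Rightarrow> (nat \<Rightarrow> nat) \<Rightarrow> 'a bpoly" where
  "mpow h a i = (\<Prod>\<mu><h. a \<mu> ^ i \<mu>)"

definition mbinom :: "nat \<Rightarrow> (nat \<Rightarrow> nat) \<Rightarrow> (nat \<Rightarrow> nat) \<Rightarrow> nat" where
  "mbinom h j i = (\<Prod>\<mu><h. j \<mu> choose i \<mu>)"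

definition Iset :: "nat \<Rightarrow> nat \<Rightarrow> (nat \<Rightarrow> nat) set" where
  "Iset h s = {i \<in> mvecs h. mabs h i < s}"

definition Jset :: "nat \<Rightarrow> nat \<Rightarrow> (nat \<Rightarrow> nat) set" where
  "Jset h l = {j \<in> mvecs h. 1 \<le> mabs h j \<and> mabs h j \<le> l}"

text \<open>A_{i,j} = binom(j,i) R^(j-i) G^|i|  (zero if not i \<preceq> j, since then a binomial vanishes).\<close>
definition Acoef :: "nat \<Rightarrow> nat \<Rightarrow> (nat \<Rightarrow> 'a::comm_ring_1 bpoly) \<Rightarrow> (nat \<Rightarrow> nat) \<Rightarrow> (nat \<Rightarrow> nat) \<Rightarrow> 'a bpoly" where
  "Acoef q h Rv i j = of_nat (mbinom h j i) * mpow h Rv (\<lambda>\<mu>. j \<mu> - i \<mu>) * Gp q ^ mabs h i"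

definition hgenus :: "nat \<Rightarrow> int" where
  "hgenus q = int (q * (q - 1) div 2)"

text \<open>Solutions of Problem 1.  Conditions on deg_H of zero elements are vacuous.\<close>
definition problem1_solution ::
  "nat \<Rightarrow> nat \<Rightarrow> nat \<Rightarrow> nat \<Rightarrow> int \<Rightarrow> (nat \<Rightarrow> 'a::comm_ring_1 bpoly)
   \<Rightarrow> ((nat \<Rightarrow> nat) \<Rightarrow> 'a bpoly) \<Rightarrow> ((nat \<Rightarrow> nat) \<Rightarrow> 'a bpoly) \<Rightarrow> bool" where
  "problem1_solution q h s l mH Rv lam psi \<longleftrightarrow>
     (\<forall>i\<in>Iset h s. inR q (lam i)) \<and> (\<forall>j\<in>Jset h l. inR q (psi j)) \<and>
     monicH q (lam (\<lambda>_. 0)) \<and>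
     (\<forall>j\<in>Jset h l. mabs h j < s \<longrightarrow>
         heq q (psi j) (\<Sum>i\<in>Iset h s. lam i * Acoef q h Rv i j)) \<and>
     (\<forall>j\<in>Jset h l. s \<le> mabs h j \<longrightarrow>
         (\<exists>t. heq q (psi j) ((\<Sum>i\<in>Iset h s. lam i * Acoef q h Rv i j) + Gp q ^ s * t))) \<and>
     (\<forall>i\<in>Iset h s. lam i \<noteq> 0 \<longrightarrow>
         degH q (lam (\<lambda>_. 0)) \<ge> degH q (lam i) - int (mabs h i) * (2 * hgenus q - 1)) \<and>
     (\<forall>j\<in>Jset h l. psi j \<noteq> 0 \<longrightarrow>
         degH q (lam (\<lambda>_. 0)) \<ge> degH q (psi j) - int (mabs h j) * mH)"

end

theory Submission
  imports Defs "HOL-Number_Theory.Cong" "HOL-Library.FuncSet"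
begin

definition ev :: "'a::comm_ring_1 \<times> 'a \<Rightarrow> 'a bpoly \<Rightarrow> 'a" where
  "ev P p = poly (poly p [:snd P:]) (fst P)"

lemma evalH_ev: "evalH p P = ev P p"
proof (induction p)
  case 0 then show ?case by (simp add: evalH_def ev_def)
next
  case (pCons c p)
  then show ?case by (simp add: evalH_def ev_def map_poly_pCons)
qed

lemma ev_add [simp]: "ev P (a + b) = ev P a + ev P b" by (simp add: ev_def)
lemma ev_diff [simp]: "ev P (a - b) = ev P a - ev P b" by (simp add: ev_def)
lemma ev_minus [simp]: "ev P (- a) = - ev P a" by (simp add: ev_def)
lemma ev_mult [simp]: "ev P (a * b) = ev P a * ev P b" by (simp add: ev_def)
lemma ev_power [simp]: "ev P (a ^ n) = ev P a ^ n" by (simp add: ev_def poly_power)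
lemma ev_0 [simp]: "ev P 0 = 0" by (simp add: ev_def)
lemma ev_1 [simp]: "ev P 1 = 1" by (simp add: ev_def)
lemma ev_const [simp]: "ev P [:[:c:]:] = c" by (simp add: ev_def)
lemma ev_constX [simp]: "ev P [:c:] = poly c (fst P)" by (simp add: ev_def)
lemma ev_Xp [simp]: "ev P Xp = fst P" by (simp add: ev_def Xp_def)
lemma ev_Yp [simp]: "ev P Yp = snd P" by (simp add: ev_def Yp_def)
lemma ev_sum [simp]: "ev P (sum f A) = (\<Sum>x\<in>A. ev P (f x))"
  by (induction A rule: infinite_finite_induct) auto
lemma ev_prod [simp]: "ev P (prod f A) = (\<Prod>x\<in>A. ev P (f x))"
  by (induction A rule: infinite_finite_induct) auto
lemma ev_of_nat [simp]: "ev P (of_nat n) = of_nat n"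
  by (induction n) auto

lemma ev_hermH: "P \<in> hpts q \<Longrightarrow> ev P (hermH q) = 0"
  by (cases P) (simp add: hermH_def hpts_def)

lemma heq_refl [simp]: "heq q a a" by (simp add: heq_def)
lemma heq_sym: "heq q a b \<Longrightarrow> heq q b a"
  unfolding heq_def by (subst dvd_minus_iff[symmetric]) simp
lemma heq_trans: "heq q a b \<Longrightarrow> heq q b c \<Longrightarrow> heq q a c"
proof -
  assume "heq q a b" "heq q b c"
  then have "hermH q dvd (a - b) + (b - c)" unfolding heq_def by (rule dvd_add)
  then show ?thesis unfolding heq_def by simp
qed
lemma heq_add: "heq q a b \<Longrightarrow> heq q c d \<Longrightarrow> heq q (a + c) (b + d)"
proof -
  assume "heq q a b" "heq q c d"
  then have "hermH q dvd (a - b) + (c - d)" unfolding heq_def by (rule dvd_add)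
  moreover have "(a - b) + (c - d) = (a + c) - (b + d)" by (simp add: algebra_simps)
  ultimately show ?thesis by (simp add: heq_def)
qed
lemma heq_diff: "heq q a b \<Longrightarrow> heq q c d \<Longrightarrow> heq q (a - c) (b - d)"
proof -
  assume "heq q a b" "heq q c d"
  then have "hermH q dvd (a - b) - (c - d)" unfolding heq_def by (simp add: dvd_diff)
  moreover have "(a - b) - (c - d) = (a - c) - (b - d)" by (simp add: algebra_simps)
  ultimately show ?thesis by (simp add: heq_def)
qed
lemma heq_mult: "heq q a b \<Longrightarrow> heq q c d \<Longrightarrow> heq q (a * c) (b * d)"
proof -
  assume "heq q a b" "heq q c d"
  then have "hermH q dvd (a - b) * c + b * (c - d)" unfolding heq_def
    by (simp add: dvd_add dvd_mult2 dvd_mult)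
  moreover have "(a - b) * c + b * (c - d) = a * c - b * d" by (simp add: algebra_simps)
  ultimately show ?thesis by (simp add: heq_def)
qed
lemma heq_power: "heq q a b \<Longrightarrow> heq q (a ^ n) (b ^ n)"
  by (induction n) (auto intro: heq_mult)
lemma heq_sum: "(\<And>x. x \<in> A \<Longrightarrow> heq q (f x) (g x)) \<Longrightarrow> heq q (sum f A) (sum g A)"
  by (induction A rule: infinite_finite_induct) (auto intro: heq_add)
lemma heq_prod: "(\<And>x. x \<in> A \<Longrightarrow> heq q (f x) (g x)) \<Longrightarrow> heq q (prod f A) (prod g A)"
  by (induction A rule: infinite_finite_induct) (auto intro: heq_mult)
lemma heq_H: "heq q (a + u * hermH q) a"
  by (simp add: heq_def)
lemma heq_iff: "heq q a b \<longleftrightarrow> (\<exists>u. a = b + u * hermH q)"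
proof
  assume "heq q a b"
  then obtain u where "a - b = hermH q * u" unfolding heq_def dvd_def by blast
  then have "a = b + u * hermH q" by (simp add: algebra_simps)
  then show "\<exists>u. a = b + u * hermH q" by blast
next
  assume "\<exists>u. a = b + u * hermH q"
  then obtain u where "a = b + u * hermH q" by blast
  then have "a - b = hermH q * u" by (simp add: algebra_simps)
  then show "heq q a b" unfolding heq_def by (rule dvdI)
qed

lemma heq_ev: "heq q a b \<Longrightarrow> P \<in> hpts q \<Longrightarrow> ev P a = ev P b"
  unfolding heq_iff using ev_hermH by fastforce

lemma Yp_power: "(Yp :: 'a::comm_ring_1 bpoly) ^ n = monom 1 n"
  by (simp add: Yp_def monom_altdef)

lemma Xp_power: "(Xp :: 'a::comm_ring_1 bpoly) ^ n = [:[:0,1:] ^ n:]"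
  by (simp add: Xp_def poly_const_pow)  

lemma hermH_monom: "hermH q = monom 1 q + monom 1 1 - monom ([:0,1:] ^ (q+1)) 0"
  unfolding hermH_def Yp_power[symmetric] Xp_power
  by (simp add: Yp_def monom_0)

lemma coeff_hermH:
  "coeff (hermH q :: 'a::comm_ring_1 bpoly) n =
    (if n = q then 1 else 0) + (if n = 1 then 1 else 0) - (if n = 0 then [:0,1:] ^ (q+1) else 0)"
  by (simp add: hermH_monom)

lemma degree_hermH: "2 \<le> q \<Longrightarrow> degree (hermH q :: 'a::{comm_ring_1,ring_no_zero_divisors} bpoly) = q"
proof (rule antisym)
  assume q: "2 \<le> q"
  show "degree (hermH q :: 'a bpoly) \<le> q"
    by (rule degree_le) (use q in \<open>auto simp: coeff_hermH\<close>)
  show "q \<le> degree (hermH q :: 'a bpoly)"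
    by (rule le_degree) (use q in \<open>auto simp: coeff_hermH\<close>)
qed

lemma lead_hermH: "2 \<le> q \<Longrightarrow> lead_coeff (hermH q :: 'a::{comm_ring_1,ring_no_zero_divisors} bpoly) = 1"
  by (simp add: degree_hermH coeff_hermH)

lemma hermH_nz: "2 \<le> q \<Longrightarrow> (hermH q :: 'a::{comm_ring_1,ring_no_zero_divisors} bpoly) \<noteq> 0"
proof
  assume "2 \<le> q" "hermH q = (0 :: 'a bpoly)"
  then show False using lead_hermH[of q, where 'a='a] by simp
qed

lemma red_unique:
  fixes a b :: "'a::idom bpoly"
  assumes q: "2 \<le> q" and "inR q a" "inR q b" "heq q a b"
  shows "a = b"
proof -
  obtain u where u: "a - b = hermH q * u" using assms(4) unfolding heq_def dvd_def by blast
  show ?thesis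
  proof (cases "u = 0")
    case True then show ?thesis using u by simp
  next
    case False
    have "degree (a - b) = q + degree u"
      using u degree_mult_eq[OF hermH_nz[OF q] False] degree_hermH[OF q] by simp
    moreover have "degree (a - b) < q"
      using assms(2,3) unfolding inR_def by (intro degree_diff_less) auto
    ultimately show ?thesis by simp
  qed
qed

lemma hred_props:
  fixes p :: "'a::idom bpoly"
  assumes q: "2 \<le> q"
  shows "inR q (hred q p)" "heq q p (hred q p)"
proof -
  obtain qq r where pd: "pseudo_divmod p (hermH q) = (qq, r)" by (cases "pseudo_divmod p (hermH q)") auto
  have r: "hred q p = r" unfolding hred_def pseudo_mod_def pd by simp
  have 1: "p = hermH q * qq + r" using pseudo_divmod(1)[OF hermH_nz[OF q] pd, unfolded lead_hermH[OF q]] by simp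
  have 2: "r = 0 \<or> degree r < degree (hermH q :: 'a bpoly)" using pseudo_divmod(2)[OF hermH_nz[OF q] pd] by auto
  show "inR q (hred q p)" using 2 q unfolding r inR_def by (auto simp: degree_hermH)
  show "heq q p (hred q p)" unfolding r heq_def using 1 by simp
qed

lemma of_nat_mod_CHAR: "(of_nat (k mod CHAR('a)) :: 'a::semiring_1_cancel) = of_nat k"
  by (simp add: of_nat_eq_iff_cong_CHAR cong_def)

lemma CHAR_dvd_card:
  shows "CHAR('a::{finite,comm_ring_1}) dvd card (UNIV :: 'a set)"
proof -
  define r where "r = CHAR('a)"
  have rp: "r > 0" unfolding r_def by (rule finite_imp_CHAR_pos) simp
  define orb where "orb x = (\<lambda>k. x + (of_nat k :: 'a)) ` {..<r}" for x
  have mem: "x + of_nat k \<in> orb x" for x k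
  proof -
    have "x + of_nat k = x + of_nat (k mod r)" by (simp add: r_def of_nat_mod_CHAR)
    then show ?thesis unfolding orb_def using rp by auto
  qed
  have sub: "orb y \<subseteq> orb x" if zx: "z \<in> orb x" and zy: "z \<in> orb y" for x y z
  proof -
    obtain k where k: "z = x + of_nat k" using zx unfolding orb_def by blast
    obtain l where l: "z = y + of_nat l" using zy unfolding orb_def by blast
    have "of_nat (l * r) = (0::'a)" by (simp add: r_def)
    have neg: "(of_nat (l * (r - 1)) :: 'a) = - of_nat l"
    proof -
      have "(of_nat (l * (r - 1)) :: 'a) + of_nat l = of_nat (l * (r - 1) + l)" by simp
      also have "l * (r - 1) + l = l * r" using rp by (cases r) (auto simp: algebra_simps)
      also have "(of_nat (l * r) :: 'a) = 0" by (simp add: r_def)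
      finally show ?thesis by (simp add: eq_neg_iff_add_eq_0)
    qed
    have y: "y = x + of_nat (k + l * (r - 1))" using k l neg by (simp add: algebra_simps)
    show ?thesis
    proof
      fix w assume "w \<in> orb y"
      then obtain m where m: "w = y + of_nat m" unfolding orb_def by blast
      have "w = x + of_nat (k + l * (r - 1) + m)" unfolding m y by (simp add: add.assoc)
      then show "w \<in> orb x" using mem by metis
    qed
  qed
  have inj: "inj_on (of_nat :: nat \<Rightarrow> 'a) {..<r}"
    by (auto simp: inj_on_def r_def of_nat_eq_iff_cong_CHAR intro: cong_less_modulus_unique_nat)
  have card_orb: "card (orb x) = r" for x
  proof -
    have "orb x = (\<lambda>y. x + y) ` (of_nat ` {..<r})" unfolding orb_def by auto
    then have "card (orb x) = card (of_nat ` {..<r} :: 'a set)"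
      by (simp add: card_image inj_on_def)
    also have "\<dots> = r" using inj by (simp add: card_image)
    finally show ?thesis .
  qed
  have "r * card (range orb) = card (\<Union>(range orb))"
  proof (rule card_partition)
    fix c assume "c \<in> range orb" then show "card c = r" using card_orb by blast
  next
      fix c1 c2 assume "c1 \<in> range orb" "c2 \<in> range orb" "c1 \<noteq> c2"
      then obtain x y where xy: "c1 = orb x" "c2 = orb y" by blast
      show "c1 \<inter> c2 = {}"
      proof (rule ccontr)
        assume "c1 \<inter> c2 \<noteq> {}"
        then obtain z where "z \<in> orb x" "z \<in> orb y" using xy by blast
        then have "orb x = orb y" using sub by (meson subset_antisym)
        then show False using xy \<open>c1 \<noteq> c2\<close> by simp
      qed
  qed simp_all
  moreover have "\<Union>(range orb) = UNIV" using mem[of _ 0] by auto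
  ultimately have "card (UNIV :: 'a set) = r * card (range orb)" by simp
  then show ?thesis unfolding r_def by (rule dvdI)
qed

definition hyp :: "nat \<Rightarrow> 'a::{finite,field} itself \<Rightarrow> bool" where
  "hyp q T \<longleftrightarrow> 2 \<le> q \<and> prime CHAR('a) \<and> (\<exists>k>0. q = CHAR('a) ^ k) \<and> card (UNIV :: 'a set) = q ^ 2"

lemma hypI:
  assumes "\<exists>p k. prime p \<and> 0 < k \<and> q = p ^ k" and "card (UNIV :: 'a::{finite,field} set) = q ^ 2"
  shows "hyp q TYPE('a)"
proof -
  obtain p k where pk: "prime p" "0 < k" "q = p ^ k" using assms(1) by blast
  have cp: "CHAR('a) > 0" by (rule finite_imp_CHAR_pos) simp
  have pc: "prime CHAR('a)" using prime_CHAR_semidom[OF cp] .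
  have "p ^ (2 * k) = q ^ 2" unfolding pk(3) by (simp add: power_mult[symmetric] mult.commute)
  then have "CHAR('a) dvd p ^ (2 * k)" using CHAR_dvd_card[where 'a='a] assms(2) by simp
  then have "CHAR('a) dvd p" by (rule prime_dvd_power[OF pc])
  then have cq: "CHAR('a) = p" by (rule primes_dvd_imp_eq[OF pc pk(1)])
  have "2 \<le> p" using pk(1) prime_ge_2_nat by blast
  moreover have "p \<le> q" using pk(2,3) \<open>2 \<le> p\<close> by (simp add: self_le_power)
  ultimately have "2 \<le> q" by linarith
  then show ?thesis unfolding hyp_def using pc pk(2,3) cq assms(2) by blast
qed

lemma frob:
  fixes x y :: "'b::comm_semiring_1"
  assumes "prime CHAR('b)" "\<exists>k>0. q = CHAR('b) ^ k"
  shows "(x + y) ^ q = x ^ q + y ^ q"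
proof -
  obtain k where k: "q = CHAR('b) ^ k" using assms(2) by blast
  show ?thesis by (rule freshmans_dream'[OF assms(1) k])
qed

lemma hyp_q: "hyp q TYPE('a::{finite,field}) \<Longrightarrow> 2 \<le> q"
  by (simp add: hyp_def)

lemma hyp_card: "hyp q TYPE('a::{finite,field}) \<Longrightarrow> card (UNIV :: 'a set) = q ^ 2"
  by (simp add: hyp_def)

lemma frobA:
  fixes x y :: "'a::{finite,field}"
  assumes "hyp q TYPE('a)"
  shows "(x + y) ^ q = x ^ q + y ^ q"
  using assms unfolding hyp_def by (intro frob) auto

lemma frobB:
  fixes x y :: "'a::{finite,field} bpoly"
  assumes "hyp q TYPE('a)"
  shows "(x + y) ^ q = x ^ q + y ^ q"
  using assms unfolding hyp_def by (intro frob) auto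

lemma frobB_diff:
  fixes x y :: "'a::{finite,field} bpoly"
  assumes "hyp q TYPE('a)"
  shows "(x - y) ^ q = x ^ q - y ^ q"
  using frobB[OF assms, of "x - y" y] by (simp add: algebra_simps)

lemma frobA_diff:
  fixes x y :: "'a::{finite,field}"
  assumes "hyp q TYPE('a)"
  shows "(x - y) ^ q = x ^ q - y ^ q"
  using frobA[OF assms, of "x - y" y] by (simp add: algebra_simps)

lemma q_zero:
  assumes "hyp q TYPE('a::{finite,field})"
  shows "(of_nat q :: 'a) = 0"
proof -
  obtain k where k: "k > 0" "q = CHAR('a) ^ k" using assms unfolding hyp_def by blast
  then have "CHAR('a) dvd q" by simp
  then show ?thesis by (simp add: of_nat_eq_0_iff_char_dvd)
qed

lemma power_card_same:
  fixes x :: "'a::{finite,field}"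
  shows "x ^ card (UNIV :: 'a set) = x"
proof (cases "x = 0")
  case False
  have "x * (\<Prod>y\<in>UNIV-{0}. x * y) = x * x ^ (card (UNIV :: 'a set) - 1) * \<Prod>(UNIV-{0})"
    by (simp add: prod.distrib mult_ac)
  also have "x * x ^ (card (UNIV :: 'a set) - 1) = x ^ Suc (card (UNIV :: 'a set) - 1)"
    by (subst power_Suc) auto
  also have "Suc (card (UNIV :: 'a set) - 1) = card (UNIV :: 'a set)"
    using finite_UNIV_card_ge_0[where ?'a = 'a] by simp
  also have "(\<Prod>y\<in>UNIV-{0}. x * y) = (\<Prod>y\<in>UNIV-{0}. y)"
    by (rule prod.reindex_bij_witness[of _ "\<lambda>y. y / x" "\<lambda>y. x * y"]) (use False in auto)
  finally show ?thesis
    by simp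
qed (use finite_UNIV_card_ge_0[where ?'a = 'a] in auto)

lemma power_q2:
  fixes x :: "'a::{finite,field}"
  assumes "hyp q TYPE('a)"
  shows "x ^ (q ^ 2) = x"
  using power_card_same[of x] hyp_card[OF assms] by metis


section \<open>Weights\<close>

definition hw :: "nat \<Rightarrow> nat \<Rightarrow> nat \<Rightarrow> nat" where
  "hw q i j = i * q + j * (q + 1)"

definition wt :: "nat \<Rightarrow> 'a::zero bpoly \<Rightarrow> nat" where
  "wt q p = Max (insert 0 {hw q i j | i j. hcoeff p i j \<noteq> 0})"

lemma hcoeff_nz_bound:
  assumes "hcoeff p i j \<noteq> 0"
  shows "j \<le> degree p" "i \<le> degree (coeff p j)"
  using assms unfolding hcoeff_def
  by (auto intro: le_degree)

lemma finite_supp: "finite {(i, j). hcoeff p i j \<noteq> 0}"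
proof -
  have "{(i, j). hcoeff p i j \<noteq> 0} \<subseteq> (\<Union>j\<le>degree p. {..degree (coeff p j)} \<times> {j})"
    using hcoeff_nz_bound by fastforce
  then show ?thesis by (rule finite_subset) auto
qed

lemma finite_wts: "finite {hw q i j | i j. hcoeff p i j \<noteq> 0}"
proof -
  have eq: "{hw q i j | i j. hcoeff p i j \<noteq> 0} = (\<lambda>(i, j). hw q i j) ` {(i, j). hcoeff p i j \<noteq> 0}"
    by auto
  show ?thesis unfolding eq by (rule finite_imageI[OF finite_supp])
qed

lemma wt_ge: "hcoeff p i j \<noteq> 0 \<Longrightarrow> hw q i j \<le> wt q p"
  unfolding wt_def using finite_wts by (intro Max_ge) auto

lemma wt_le: "(\<And>i j. hcoeff p i j \<noteq> 0 \<Longrightarrow> hw q i j \<le> w) \<Longrightarrow> wt q p \<le> w"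
  unfolding wt_def using finite_wts by (intro Max.boundedI) auto

lemma wt_attained:
  assumes "p \<noteq> 0"
  shows "\<exists>i j. hcoeff p i j \<noteq> 0 \<and> wt q p = hw q i j"
proof -
  obtain j where j: "coeff p j \<noteq> 0" using assms leading_coeff_0_iff by blast
  then obtain i where "coeff (coeff p j) i \<noteq> 0" using leading_coeff_0_iff by blast
  then have ne: "{hw q i j | i j. hcoeff p i j \<noteq> 0} \<noteq> {}" unfolding hcoeff_def by blast
  have "wt q p = Max {hw q i j | i j. hcoeff p i j \<noteq> 0}"
    unfolding wt_def using ne finite_wts by (subst Max_insert) auto
  also have "\<dots> \<in> {hw q i j | i j. hcoeff p i j \<noteq> 0}"
    using ne finite_wts by (intro Max_in) auto
  finally show ?thesis by auto
qed

lemma degH_wt: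
  assumes "p \<noteq> 0"
  shows "degH q p = int (wt q p)"
proof -
  obtain i0 j0 where ij: "hcoeff p i0 j0 \<noteq> 0" "wt q p = hw q i0 j0"
    using wt_attained[OF assms] by blast
  have S: "{int (i * q + j * (q + 1)) | i j. hcoeff p i j \<noteq> 0} =
           int ` {hw q i j | i j. hcoeff p i j \<noteq> 0}" unfolding hw_def by blast
  have "degH q p = Max (int ` {hw q i j | i j. hcoeff p i j \<noteq> 0})"
    unfolding degH_def S ..
  also have "\<dots> \<le> int (wt q p)"
    using finite_wts wt_ge ij(1) by (intro Max.boundedI) auto
  finally have 1: "degH q p \<le> int (wt q p)" .
  have "int (wt q p) \<in> int ` {hw q i j | i j. hcoeff p i j \<noteq> 0}"
    using ij by blast
  then have "int (wt q p) \<le> degH q p"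
    unfolding degH_def S using finite_wts by (intro Max_ge) auto
  with 1 show ?thesis by simp
qed

lemma hcoeff_add [simp]: "hcoeff (a + b) i j = hcoeff a i j + hcoeff b i j"
  by (simp add: hcoeff_def)
lemma hcoeff_minus [simp]: "hcoeff (- a) i j = - hcoeff a i j"
  by (simp add: hcoeff_def)
lemma hcoeff_diff [simp]: "hcoeff (a - b) i j = hcoeff a i j - hcoeff b i j"
  by (simp add: hcoeff_def)
lemma hcoeff_0 [simp]: "hcoeff 0 i j = 0"
  by (simp add: hcoeff_def)
lemma hcoeff_sum: "hcoeff (sum f A) i j = (\<Sum>x\<in>A. hcoeff (f x) i j)"
  by (simp add: hcoeff_def coeff_sum)
lemma hcoeff_mult:
  "hcoeff (a * b) i j = (\<Sum>k\<le>j. \<Sum>l\<le>i. hcoeff a l k * hcoeff b (i - l) (j - k))"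
  by (simp add: hcoeff_def coeff_mult coeff_sum)

lemma wt_0 [simp]: "wt q 0 = 0"
  by (rule antisym, rule wt_le) auto

lemma wt_add: "wt q (a + b) \<le> max (wt q a) (wt q b)"
proof (rule wt_le)
  fix i j assume "hcoeff (a + b) i j \<noteq> 0"
  then have "hcoeff a i j \<noteq> 0 \<or> hcoeff b i j \<noteq> 0" by auto
  then show "hw q i j \<le> max (wt q a) (wt q b)"
    using wt_ge[of a i j q] wt_ge[of b i j q] by auto
qed

lemma wt_minus: "wt q (- a) \<le> wt q (a :: 'a::ab_group_add bpoly)"
  by (rule wt_le) (simp add: wt_ge)

lemma wt_diff: "wt q (a - b) \<le> max (wt q a) (wt q (b :: 'a::ab_group_add bpoly))"
proof (rule wt_le)
  fix i j assume "hcoeff (a - b) i j \<noteq> 0"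
  then have "hcoeff a i j \<noteq> 0 \<or> hcoeff b i j \<noteq> 0" by auto
  then show "hw q i j \<le> max (wt q a) (wt q b)"
    using wt_ge[of a i j q] wt_ge[of b i j q] by auto
qed

lemma wt_mult: "wt q (a * b) \<le> wt q a + wt q (b :: 'a::comm_ring_1 bpoly)"
proof (rule wt_le)
  fix i j assume "hcoeff (a * b) i j \<noteq> 0"
  then obtain k l where kl: "k \<le> j" "l \<le> i" "hcoeff a l k * hcoeff b (i - l) (j - k) \<noteq> 0"
    unfolding hcoeff_mult by (metis (no_types, lifting) atMost_iff sum.neutral)
  then have "hw q l k \<le> wt q a" "hw q (i - l) (j - k) \<le> wt q b"
    by (auto intro!: wt_ge)
  moreover have "hw q i j = hw q l k + hw q (i - l) (j - k)"
  proof -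
    obtain i' j' where "i = l + i'" "j = k + j'" using kl(1,2) le_Suc_ex by metis
    then show ?thesis unfolding hw_def by (simp add: algebra_simps)
  qed
  ultimately show "hw q i j \<le> wt q a + wt q b" by linarith
qed

lemma wt_one [simp]: "wt q (1 :: 'a::comm_ring_1 bpoly) = 0"
proof (rule antisym, rule wt_le)
  fix i j assume "hcoeff (1 :: 'a bpoly) i j \<noteq> 0"
  then have "i = 0 \<and> j = 0" by (cases "j = 0") (auto simp: hcoeff_def coeff_1 split: if_splits)
  then show "hw q i j \<le> 0" by (simp add: hw_def)
qed simp

lemma wt_power: "wt q (a ^ n) \<le> n * wt q (a :: 'a::comm_ring_1 bpoly)"
proof (induction n)
  case (Suc n)
  have "wt q (a ^ Suc n) \<le> wt q a + wt q (a ^ n)" by (simp add: wt_mult)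
  then show ?case using Suc by simp
qed simp

lemma wt_prod: "wt q (prod f A) \<le> (\<Sum>x\<in>A. wt q (f x :: 'a::comm_ring_1 bpoly))"
proof (induction A rule: infinite_finite_induct)
  case (insert x F)
  then show ?case using wt_mult[of q "f x" "prod f F"] by simp
qed simp_all

lemma wt_sum: "(\<And>x. x \<in> A \<Longrightarrow> wt q (f x) \<le> w) \<Longrightarrow> wt q (sum f A :: 'a::comm_ring_1 bpoly) \<le> w"
proof (induction A rule: infinite_finite_induct)
  case (insert x F)
  then have "wt q (f x) \<le> w" "wt q (sum f F) \<le> w" by auto
  then have "max (wt q (f x)) (wt q (sum f F)) \<le> w" by simp
  have "wt q (sum f (insert x F)) = wt q (f x + sum f F)" using insert(1,2) by simp
  also have "\<dots> \<le> max (wt q (f x)) (wt q (sum f F))" by (rule wt_add)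
  finally show ?case using \<open>max (wt q (f x)) (wt q (sum f F)) \<le> w\<close> by linarith
qed simp_all

lemma wt_const_poly: "wt q [:c:] \<le> q * degree c"
proof (rule wt_le)
  fix i j assume "hcoeff [:c:] i j \<noteq> 0"
  then have "j = 0" "i \<le> degree c" using hcoeff_nz_bound[of "[:c:]" i j] by (auto simp: hcoeff_def)
  then show "hw q i j \<le> q * degree c" by (simp add: hw_def)
qed

lemma wt_monom: "wt q (monom c k) \<le> q * degree c + k * (q + 1)"
proof (rule wt_le)
  fix i j assume "hcoeff (monom c k) i j \<noteq> 0"
  then have "j = k" "i \<le> degree c" by (auto simp: hcoeff_def split: if_splits intro: le_degree)
  then show "hw q i j \<le> q * degree c + k * (q + 1)" by (simp add: hw_def)
qed

lemma wt_const [simp]: "wt q [:[:c:]:] = 0"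
  using wt_const_poly[of q "[:c:]"] by simp

lemma wt_of_nat [simp]: "wt q (of_nat n :: 'a::comm_ring_1 bpoly) = 0"
proof -
  have "(of_nat n :: 'a bpoly) = [:[:of_nat n:]:]" by (simp add: of_nat_poly)
  then show ?thesis by simp
qed

lemma wt_Xp: "wt q (Xp :: 'a::comm_ring_1 bpoly) \<le> q"
proof -
  have "degree [:0, 1::'a:] = 1" by simp
  then show ?thesis using wt_const_poly[of q "[:0,1::'a:]"] by (simp add: Xp_def)
qed

lemma wt_Yp: "wt q (Yp :: 'a::comm_ring_1 bpoly) \<le> q + 1"
proof -
  have "Yp = (monom 1 1 :: 'a bpoly)" by (simp add: Yp_def monom_altdef)
  then show ?thesis using wt_monom[of q "1 :: 'a poly" 1] by simp
qed

lemma col_le: "coeff p j \<noteq> 0 \<Longrightarrow> q * degree (coeff p j) + j * (q + 1) \<le> wt q p"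
  using wt_ge[of p "degree (coeff p j)" j q] by (simp add: hcoeff_def hw_def mult.commute)

lemma wt_hermH: "1 \<le> q \<Longrightarrow> wt q (hermH q :: 'a::comm_ring_1 bpoly) \<le> q * (q + 1)"
proof -
  assume q1: "1 \<le> q"
  have "wt q (Yp ^ q :: 'a bpoly) \<le> q * (q + 1)"
    using wt_power[of q Yp q] wt_Yp[of q, where 'a='a] mult_le_mono2 order_trans by blast
  moreover have "wt q (Xp ^ (q + 1) :: 'a bpoly) \<le> q * (q + 1)"
    using wt_power[of q Xp "q+1"] wt_Xp[of q, where 'a='a] mult_le_mono2 order_trans
    by (metis mult.commute)
  moreover have "wt q (Yp :: 'a bpoly) \<le> q * (q + 1)"
    using wt_Yp[of q, where 'a='a] q1 by (metis le_trans mult_le_mono1 mult_1)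
  ultimately show ?thesis unfolding hermH_def
    using wt_add[of q "Yp ^ q" "Yp :: 'a bpoly"] wt_diff[of q "Yp ^ q + Yp" "Xp ^ (q + 1) :: 'a bpoly"]
    by linarith
qed

section \<open>Reduction with weight control\<close>

lemma red_wt:
  fixes p :: "'a::idom bpoly"
  assumes q: "2 \<le> q"
  shows "\<exists>u. inR q (p - u * hermH q) \<and> wt q (p - u * hermH q) \<le> wt q p \<and>
             (u = 0 \<or> wt q u + q * (q + 1) \<le> wt q p)"
proof (induction "degree p" arbitrary: p rule: less_induct)
  case less
  show ?case
  proof (cases "degree p < q")
    case True
    then show ?thesis by (intro exI[of _ 0]) (simp add: inR_def)
  next
    case False
    define d where "d = degree p"
    define c where "c = coeff p d"
    have dq: "q \<le> d" using False d_def by simp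
    have p0: "p \<noteq> 0" using dq q d_def by auto
    have c0: "c \<noteq> 0" using p0 unfolding c_def d_def by simp
    define m0 where "m0 = monom c (d - q)"
    define p' where "p' = p - m0 * hermH q"
    have m00: "m0 \<noteq> 0" using c0 by (simp add: m0_def)
    have dm0: "degree m0 = d - q" using c0 by (simp add: m0_def degree_monom_eq)
    have dmH: "degree (m0 * hermH q) = d"
      using degree_mult_eq[OF m00 hermH_nz[OF q, where 'a='a]] dm0 degree_hermH[OF q, where 'a='a] dq by (simp add: degree_hermH[OF q, where 'a='a])
    have cmH: "coeff (m0 * hermH q) d = c"
    proof -
      have "coeff (m0 * hermH q) (degree m0 + degree (hermH q :: 'a bpoly)) =
            coeff m0 (degree m0) * coeff (hermH q :: 'a bpoly) (degree (hermH q :: 'a bpoly))" using coeff_mult_degree_sum[of m0 "hermH q :: 'a bpoly"] by simp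
      moreover have "degree m0 + degree (hermH q :: 'a bpoly) = d" using dm0 degree_hermH[OF q, where 'a='a] dq by simp
      moreover have "coeff m0 (degree m0) = c" unfolding dm0 by (simp add: m0_def)
      ultimately show ?thesis using lead_hermH[OF q, where 'a='a] by simp
    qed
    have dp'le: "degree p' \<le> d"
      unfolding p'_def using dmH d_def by (metis degree_diff_le le_refl)
    have cp': "coeff p' d = 0" unfolding p'_def using cmH c_def by simp
    have dp': "degree p' < degree p"
    proof (cases "p' = 0")
      case True then show ?thesis using dq q d_def by simp
    next
      case False
      then have "degree p' \<noteq> d" using cp' by (metis leading_coeff_0_iff)
      then show ?thesis using dp'le d_def by simp
    qed
    have colp: "q * degree c + d * (q + 1) \<le> wt q p" using col_le[of p d q] c0 c_def by simp
    have wm0: "wt q m0 + q * (q + 1) \<le> wt q p"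
    proof -
      have "wt q m0 \<le> q * degree c + (d - q) * (q + 1)" unfolding m0_def by (rule wt_monom)
      moreover have "(d - q) * (q + 1) + q * (q + 1) = d * (q + 1)"
        using dq by (metis add_mult_distrib le_add_diff_inverse2)
      ultimately show ?thesis using colp by linarith
    qed
    have wp': "wt q p' \<le> wt q p"
    proof -
      have "wt q (m0 * hermH q) \<le> wt q m0 + q * (q + 1)"
        using wt_mult[of q m0 "hermH q"] wt_hermH[of q, where 'a='a] q by linarith
      then show ?thesis unfolding p'_def using wt_diff[of q p "m0 * hermH q"] wm0 by linarith
    qed
    obtain u' where u': "inR q (p' - u' * hermH q)" "wt q (p' - u' * hermH q) \<le> wt q p'"
      "u' = 0 \<or> wt q u' + q * (q + 1) \<le> wt q p'"
      using less(1)[OF dp'] by blast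
    define u where "u = u' + m0"
    have eq: "p - u * hermH q = p' - u' * hermH q" unfolding u_def p'_def by (simp add: algebra_simps)
    have "wt q u + q * (q + 1) \<le> wt q p"
    proof (cases "u' = 0")
      case True then show ?thesis using wm0 by (simp add: u_def)
    next
      case False
      then have "wt q u' + q * (q + 1) \<le> wt q p" using u'(3) wp' by linarith
      then show ?thesis using wt_add[of q u' m0] wm0 unfolding u_def by linarith
    qed
    then show ?thesis using u' wp' eq by (intro exI[of _ u]) auto
  qed
qed

lemma hred_wt:
  fixes p :: "'a::idom bpoly"
  assumes q: "2 \<le> q"
  shows "wt q (hred q p) \<le> wt q p"
proof -
  obtain u where u: "inR q (p - u * hermH q)" "wt q (p - u * hermH q) \<le> wt q p"
    using red_wt[OF q] by blast
  have "hred q p = p - u * hermH q"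
  proof (rule red_unique[OF q hred_props(1)[OF q] u(1)])
    have "heq q p (p - u * hermH q)" using heq_H[of q "p - u * hermH q" u] by simp
    then have "heq q (p - u * hermH q) p" by (rule heq_sym)
    then show "heq q (hred q p) (p - u * hermH q)"
      using heq_sym[OF hred_props(2)[OF q]] heq_sym heq_trans by metis
  qed
  then show ?thesis using u(2) by simp
qed


lemma map_poly_add_hom:
  assumes "f 0 = 0" "\<And>x y. f (x + y) = f x + f y"
  shows "map_poly f (p + r) = map_poly f p + map_poly f r"
  by (intro poly_eqI) (simp add: coeff_map_poly assms)

lemma hom_sum:
  assumes "f 0 = 0" "\<And>x y. f (x + y) = f x + f y"
  shows "f (sum g A) = (\<Sum>x\<in>A. f (g x))"
  by (induction A rule: infinite_finite_induct) (simp_all add: assms)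

lemma map_poly_mult_hom:
  fixes f :: "'a::comm_ring_1 \<Rightarrow> 'b::comm_ring_1"
  assumes "f 0 = 0" "\<And>x y. f (x + y) = f x + f y" "\<And>x y. f (x * y) = f x * f y"
  shows "map_poly f (p * r) = map_poly f p * map_poly f r"
proof (intro poly_eqI)
  fix n
  have "coeff (map_poly f (p * r)) n = f (\<Sum>i\<le>n. coeff p i * coeff r (n - i))"
    by (simp add: coeff_map_poly assms(1) coeff_mult)
  also have "\<dots> = (\<Sum>i\<le>n. f (coeff p i) * f (coeff r (n - i)))"
    by (simp add: hom_sum[OF assms(1,2)] assms(3))
  also have "\<dots> = coeff (map_poly f p * map_poly f r) n"
    by (simp add: coeff_mult coeff_map_poly assms(1))
  finally show "coeff (map_poly f (p * r)) n = coeff (map_poly f p * map_poly f r) n" .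
qed

definition phi :: "'a::comm_ring_1 \<Rightarrow> 'a bpoly \<Rightarrow> 'a poly" where
  "phi a p = map_poly (\<lambda>c. poly c a) p"

lemma phi_mult [simp]: "phi a (p * r) = phi a p * phi a r"
  unfolding phi_def by (rule map_poly_mult_hom) simp_all

lemma phi_add [simp]: "phi a (p + r) = phi a p + phi a r"
  unfolding phi_def by (rule map_poly_add_hom) simp_all

lemma coeff_phi: "coeff (phi a p) n = poly (coeff p n) a"
  by (simp add: phi_def coeff_map_poly)

lemma poly_phi: "poly (phi a p) b = ev (a, b) p"
  unfolding phi_def using evalH_ev[of p "(a, b)"] by (simp add: evalH_def)

definition xa :: "'a::comm_ring_1 \<Rightarrow> 'a bpoly" where
  "xa a = [:[:-a, 1:]:]"

lemma Xp_minus: "Xp - [:[:a:]:] = xa a"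
  by (simp add: Xp_def xa_def)

lemma ev_xa [simp]: "ev P (xa (fst P)) = 0"
  by (simp add: xa_def)

lemma xa_nz [simp]: "xa a \<noteq> 0"
  by (simp add: xa_def)

lemma xa_dvd_iff:
  fixes p :: "'a::field bpoly"
  shows "xa a dvd p \<longleftrightarrow> phi a p = 0"
proof
  assume "xa a dvd p"
  then obtain r where "p = xa a * r" by blast
  moreover have "phi a (xa a) = 0" by (simp add: phi_def xa_def map_poly_pCons)
  ultimately show "phi a p = 0" by simp
next
  assume "phi a p = 0"
  then have z: "poly (coeff p j) a = 0" for j using coeff_phi[of a p j] by simp
  define r where "r = map_poly (\<lambda>c. c div [:-a, 1:]) p"
  have "p = xa a * r"
  proof (rule poly_eqI)
    fix n
    have d: "[:-a, 1:] dvd coeff p n" using z[of n] by (simp add: poly_eq_0_iff_dvd)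
    have m: "xa a * r = smult [:-a, 1:] r" unfolding xa_def by simp
    have "coeff (xa a * r) n = [:-a, 1:] * (coeff p n div [:-a, 1:])"
      unfolding m coeff_smult by (simp only: r_def coeff_map_poly div_0)
    also have "\<dots> = coeff p n" using d by (rule dvd_mult_div_cancel)
    finally show "coeff p n = coeff (xa a * r) n" by simp
  qed
  then show "xa a dvd p" by (rule dvdI)
qed

lemma phi_hermH_nz:
  assumes q: "2 \<le> q"
  shows "phi a (hermH q :: 'a::field bpoly) \<noteq> 0"
proof -
  have "coeff (phi a (hermH q :: 'a bpoly)) q = 1"
    using q by (simp add: coeff_phi coeff_hermH)
  then show ?thesis by auto
qed

section \<open>Local rings at points\<close>

definition Sn :: "nat \<Rightarrow> 'a::field \<times> 'a \<Rightarrow> nat \<Rightarrow> 'a bpoly \<Rightarrow> bool" where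
  "Sn q P n F \<longleftrightarrow> (\<exists>g a'. ev P g \<noteq> 0 \<and> heq q (g * F) (xa (fst P) ^ n * a'))"

lemma SnI: "ev P g \<noteq> 0 \<Longrightarrow> heq q (g * F) (xa (fst P) ^ n * a') \<Longrightarrow> Sn q P n F"
  unfolding Sn_def by blast

lemma S_0: "Sn q P 0 F"
  by (rule SnI[of P 1 q F 0 F]) simp_all

lemma S_zero: "Sn q P n 0"
  by (rule SnI[of P 1 q 0 n 0]) simp_all

lemma S_cong: "Sn q P n F \<Longrightarrow> heq q F F' \<Longrightarrow> Sn q P n F'"
  unfolding Sn_def by (meson heq_mult heq_refl heq_sym heq_trans)

lemma S_mult_right: "Sn q P n F \<Longrightarrow> Sn q P n (F * B)"
proof -
  assume "Sn q P n F"
  then obtain g a' where g: "ev P g \<noteq> 0" "heq q (g * F) (xa (fst P) ^ n * a')" unfolding Sn_def by blast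
  have "heq q (g * F * B) (xa (fst P) ^ n * a' * B)" using heq_mult[OF g(2) heq_refl] .
  then show ?thesis using g(1) by (intro SnI[of P g q _ n "a' * B"]) (simp_all add: mult.assoc)
qed

lemma S_mult_left: "Sn q P n F \<Longrightarrow> Sn q P n (B * F)"
  using S_mult_right by (metis mult.commute)

lemma S_add: "Sn q P n F1 \<Longrightarrow> Sn q P n F2 \<Longrightarrow> Sn q P n (F1 + F2)"
proof -
  assume "Sn q P n F1" "Sn q P n F2"
  then obtain g1 a1 g2 a2 where g: "ev P g1 \<noteq> 0" "heq q (g1 * F1) (xa (fst P) ^ n * a1)"
    "ev P g2 \<noteq> 0" "heq q (g2 * F2) (xa (fst P) ^ n * a2)" unfolding Sn_def by blast
  have "heq q (g2 * (g1 * F1) + g1 * (g2 * F2)) (g2 * (xa (fst P) ^ n * a1) + g1 * (xa (fst P) ^ n * a2))"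
    by (rule heq_add[OF heq_mult[OF heq_refl g(2)] heq_mult[OF heq_refl g(4)]])
  then have "heq q ((g1 * g2) * (F1 + F2)) (xa (fst P) ^ n * (g2 * a1 + g1 * a2))"
    by (simp add: algebra_simps)
  then show ?thesis using g by (intro SnI[of P "g1 * g2"]) simp_all
qed

lemma S_mult: "Sn q P n F1 \<Longrightarrow> Sn q P m F2 \<Longrightarrow> Sn q P (n + m) (F1 * F2)"
proof -
  assume "Sn q P n F1" "Sn q P m F2"
  then obtain g1 a1 g2 a2 where g: "ev P g1 \<noteq> 0" "heq q (g1 * F1) (xa (fst P) ^ n * a1)"
    "ev P g2 \<noteq> 0" "heq q (g2 * F2) (xa (fst P) ^ m * a2)" unfolding Sn_def by blast
  have "heq q ((g1 * F1) * (g2 * F2)) ((xa (fst P) ^ n * a1) * (xa (fst P) ^ m * a2))"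
    by (rule heq_mult[OF g(2) g(4)])
  then have "heq q ((g1 * g2) * (F1 * F2)) (xa (fst P) ^ (n + m) * (a1 * a2))"
    by (simp add: algebra_simps power_add)
  then show ?thesis using g by (intro SnI[of P "g1 * g2"]) simp_all
qed

lemma S_mono: "m \<le> n \<Longrightarrow> Sn q P n F \<Longrightarrow> Sn q P m F"
proof -
  assume mn: "m \<le> n" "Sn q P n F"
  then obtain g a' where g: "ev P g \<noteq> 0" "heq q (g * F) (xa (fst P) ^ n * a')" unfolding Sn_def by blast
  have eq: "xa (fst P) ^ m * (xa (fst P) ^ (n - m) * a') = xa (fst P) ^ n * a'"
    using mn(1) by (simp add: mult.assoc[symmetric] power_add[symmetric])
  have "heq q (g * F) (xa (fst P) ^ m * (xa (fst P) ^ (n - m) * a'))" unfolding eq by (rule g(2))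
  then show ?thesis by (rule SnI[OF g(1)])
qed

lemma S_prod:
  assumes "finite A" "\<And>x. x \<in> A \<Longrightarrow> Sn q P (n x) (f x)"
  shows "Sn q P (\<Sum>x\<in>A. n x) (\<Prod>x\<in>A. f x)"
  using assms
proof (induction A rule: finite_induct)
  case empty
  then show ?case by (simp add: S_0)
next
  case (insert x F)
  then show ?case by (simp add: S_mult)
qed

lemma S_power: "Sn q P n F \<Longrightarrow> Sn q P (k * n) (F ^ k)"
  by (induction k) (simp_all add: S_0 S_mult)

lemma S_ev:
  assumes "Sn q P (Suc n) F" "P \<in> hpts q"
  shows "ev P F = 0"
proof -
  obtain g a' where g: "ev P g \<noteq> 0" "heq q (g * F) (xa (fst P) ^ Suc n * a')"
    using assms(1) unfolding Sn_def by blast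
  have "ev P g * ev P F = 0" using heq_ev[OF g(2) assms(2)] by simp
  then show ?thesis using g(1) by simp
qed

lemma S_cancel_unit:
  assumes "ev P w \<noteq> 0" "Sn q P n (w * F)"
  shows "Sn q P n F"
proof -
  obtain g a' where g: "ev P g \<noteq> 0" "heq q (g * (w * F)) (xa (fst P) ^ n * a')"
    using assms(2) unfolding Sn_def by blast
  show ?thesis using g assms(1) by (intro SnI[of P "g * w"]) (simp_all add: mult.assoc)
qed

lemma S_cancel_x:
  fixes F :: "'a::field bpoly"
  assumes q: "2 \<le> q" and S: "Sn q P (Suc n) (xa (fst P) * F)"
  shows "Sn q P n F"
proof -
  define x where "x = xa (fst P)"
  obtain g a' where g: "ev P g \<noteq> 0" "heq q (g * (x * F)) (x ^ Suc n * a')"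
    using S unfolding Sn_def x_def by blast
  obtain u where u: "g * (x * F) = x ^ Suc n * a' + u * hermH q"
    using g(2) unfolding heq_iff by blast
  have "u * hermH q = x * (g * F - x ^ n * a')" using u by (simp add: algebra_simps)
  then have "x dvd u * hermH q" by simp
  then have "phi (fst P) u * phi (fst P) (hermH q) = 0"
    unfolding x_def xa_dvd_iff by simp
  then have "phi (fst P) u = 0" using phi_hermH_nz[OF q, where 'a='a] by simp
  then obtain u' where u': "u = x * u'" unfolding x_def xa_dvd_iff[symmetric] by blast
  have "x * (g * F) = x * (x ^ n * a' + u' * hermH q)" using u u' by (simp add: algebra_simps)
  then have "g * F = x ^ n * a' + u' * hermH q" by (simp add: x_def)
  then have "heq q (g * F) (x ^ n * a')" unfolding heq_iff by blast
  then show ?thesis using g(1) unfolding x_def by (intro SnI[of P g]) simp_all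
qed

section \<open>The local parameter\<close>

definition yb :: "'a::comm_ring_1 \<Rightarrow> 'a bpoly" where
  "yb b = Yp - [:[:b:]:]"

definition u0 :: "nat \<Rightarrow> 'a::comm_ring_1 \<Rightarrow> 'a bpoly" where
  "u0 q b = 1 + yb b ^ (q - 1)"

lemma ev_yb [simp]: "ev P (yb (snd P)) = 0"
  by (simp add: yb_def)

lemma ev_u0:
  assumes "2 \<le> q"
  shows "ev P (u0 q (snd P)) = 1"
proof -
  have "(0::'a) ^ (q - 1) = 0" using assms by (simp add: zero_power)
  then show ?thesis by (simp add: u0_def)
qed

lemma yb_u0:
  fixes a b :: "'a::{finite,field}"
  assumes h: "hyp q TYPE('a)" and P: "(a, b) \<in> hpts q"
  shows "\<exists>w. heq q (yb b * u0 q b) (xa a * w)"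
proof -
  have q: "2 \<le> q" using hyp_q[OF h] .
  have "yb b * u0 q b = yb b + yb b ^ q"
    unfolding u0_def using q by (simp add: algebra_simps power_Suc[symmetric] del: power_Suc)
  also have "yb b ^ q = Yp ^ q - [:[:b:]:] ^ q"
    unfolding yb_def by (rule frobB_diff[OF h])
  also have "[:[:b:]:] ^ q = [:[:b ^ q:]:]" by (simp add: poly_const_pow)
  finally have 1: "yb b * u0 q b = Yp + Yp ^ q - [:[:b ^ q + b:]:]"
    by (simp add: yb_def algebra_simps)
  have bq: "b ^ q + b = a ^ (q + 1)" using P by (simp add: hpts_def)
  have "poly ([:0, 1:] ^ (q + 1) - [:a ^ (q + 1):]) a = 0" by simp
  then obtain W where W: "[:0, 1:] ^ (q + 1) - [:a ^ (q + 1):] = [:-a, 1:] * W"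
    unfolding poly_eq_0_iff_dvd by blast
  have "yb b * u0 q b = hermH q + (Xp ^ (q + 1) - [:[:a ^ (q + 1):]:])"
    unfolding 1 bq hermH_def by (simp add: algebra_simps)
  also have "Xp ^ (q + 1) - [:[:a ^ (q + 1):]:] = xa a * [:W:]"
    unfolding Xp_power xa_def using W by simp
  finally have "yb b * u0 q b = xa a * [:W:] + 1 * hermH q" by simp
  then show ?thesis unfolding heq_iff by blast
qed

lemma vanish_decomp:
  fixes F :: "'a::field bpoly"
  assumes "ev (a, b) F = 0"
  shows "\<exists>A B. F = xa a * A + yb b * B"
proof -
  have 1: "[:-[:b:], 1:] * synthetic_div F [:b:] + [:poly F [:b:]:] = F"
    by (rule synthetic_div_correct')
  have "poly (poly F [:b:]) a = 0" using assms by (simp add: ev_def)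
  then obtain e where e: "poly F [:b:] = [:-a, 1:] * e" unfolding poly_eq_0_iff_dvd by blast
  have "[:-[:b:], 1:] = yb b" by (simp add: yb_def Yp_def)
  moreover have "[:poly F [:b:]:] = xa a * [:e:]" unfolding e xa_def by simp
  ultimately have "F = xa a * [:e:] + yb b * synthetic_div F [:b:]" using 1 by (simp add: algebra_simps)
  then show ?thesis by blast
qed

lemma vanish_u0:
  fixes F :: "'a::{finite,field} bpoly"
  assumes h: "hyp q TYPE('a)" and P: "(a, b) \<in> hpts q" and "ev (a, b) F = 0"
  shows "\<exists>\<alpha>. heq q (u0 q b * F) (xa a * \<alpha>)"
proof -
  obtain A B where AB: "F = xa a * A + yb b * B" using vanish_decomp[OF assms(3)] by blast
  obtain w where w: "heq q (yb b * u0 q b) (xa a * w)" using yb_u0[OF h P] by blast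
  have "u0 q b * F = xa a * (u0 q b * A) + (yb b * u0 q b) * B" unfolding AB by (simp add: algebra_simps)
  moreover have "heq q (xa a * (u0 q b * A) + (yb b * u0 q b) * B) (xa a * (u0 q b * A) + (xa a * w) * B)"
    by (rule heq_add[OF heq_refl heq_mult[OF w heq_refl]])
  ultimately have "heq q (u0 q b * F) (xa a * (u0 q b * A + w * B))" by (simp add: algebra_simps)
  then show ?thesis by blast
qed

lemma S_step:
  fixes F :: "'a::{finite,field} bpoly"
  assumes h: "hyp q TYPE('a)" and P: "P \<in> hpts q"
    and g: "ev P g \<noteq> 0" "heq q (g * F) (xa (fst P) ^ n * a')" and a': "ev P a' = 0"
  shows "Sn q P (Suc n) F"
proof -
  obtain a b where ab: "P = (a, b)" by (cases P)
  obtain \<alpha> where al: "heq q (u0 q b * a') (xa a * \<alpha>)" using vanish_u0[OF h P[unfolded ab] a'[unfolded ab]] by blast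
  have h1: "heq q (u0 q b * (g * F)) (u0 q b * (xa a ^ n * a'))" using heq_mult[OF heq_refl g(2)] ab by simp
  have eq: "u0 q b * (xa a ^ n * a') = xa a ^ n * (u0 q b * a')" by (simp add: algebra_simps)
  have h3: "heq q (xa a ^ n * (u0 q b * a')) (xa a ^ n * (xa a * \<alpha>))" by (rule heq_mult[OF heq_refl al])
  have "heq q (u0 q b * (g * F)) (xa a ^ n * (xa a * \<alpha>))" using heq_trans[OF h1[unfolded eq] h3] .
  moreover have "u0 q b * (g * F) = (u0 q b * g) * F" by (simp add: mult.assoc)
  moreover have "xa a ^ n * (xa a * \<alpha>) = xa a ^ Suc n * \<alpha>" by (simp add: algebra_simps)
  ultimately have "heq q ((u0 q b * g) * F) (xa a ^ Suc n * \<alpha>)" by simp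
  moreover have "ev P (u0 q b * g) \<noteq> 0" using ev_u0[OF hyp_q[OF h], of P] g(1) ab by simp
  ultimately show ?thesis using ab by (intro SnI[of P "u0 q b * g"]) simp_all
qed

lemma S_vanish:
  fixes F :: "'a::{finite,field} bpoly"
  assumes h: "hyp q TYPE('a)" and P: "P \<in> hpts q" and "ev P F = 0"
  shows "Sn q P 1 F"
  using S_step[OF h P, of 1 F 0 F] assms(3) by simp

lemma val_ge_S:
  fixes F :: "'a::{finite,field} bpoly"
  assumes h: "hyp q TYPE('a)" and P: "P \<in> hpts q" and v: "val_ge q P s F"
  shows "Sn q P s F"
proof -
  obtain a b where ab: "P = (a, b)" by (cases P)
  obtain g c u where gc: "evalH g P \<noteq> 0"
    "g * F = (\<Sum>k\<le>s. c k * (Xp - [:[:fst P:]:]) ^ k * (Yp - [:[:snd P:]:]) ^ (s - k)) + u * hermH q"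
    using v unfolding val_ge_def by blast
  obtain w where w: "heq q (yb b * u0 q b) (xa a * w)" using yb_u0[OF h P[unfolded ab]] by blast
  define U where "U = u0 q b"
  have 1: "heq q (g * F) (\<Sum>k\<le>s. c k * xa a ^ k * yb b ^ (s - k))"
    using gc(2) ab by (simp add: Xp_minus yb_def heq_iff)
  have 2: "heq q (U ^ s * (c k * xa a ^ k * yb b ^ (s - k))) (xa a ^ s * (c k * w ^ (s - k) * U ^ k))"
    if "k \<le> s" for k
  proof -
    have e1: "U ^ s * (c k * xa a ^ k * yb b ^ (s - k)) = c k * xa a ^ k * (yb b * U) ^ (s - k) * U ^ k"
      using that by (simp add: power_mult_distrib algebra_simps flip: power_add)
    have e2: "heq q (c k * xa a ^ k * (yb b * U) ^ (s - k) * U ^ k) (c k * xa a ^ k * (xa a * w) ^ (s - k) * U ^ k)"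
      unfolding U_def by (rule heq_mult[OF heq_mult[OF heq_refl heq_power[OF w]] heq_refl])
    have e3: "c k * xa a ^ k * (xa a * w) ^ (s - k) * U ^ k = xa a ^ s * (c k * w ^ (s - k) * U ^ k)"
      using that by (simp add: power_mult_distrib algebra_simps flip: power_add)
    show ?thesis using e2 unfolding e1 e3 .
  qed
  have "heq q (U ^ s * (g * F)) (U ^ s * (\<Sum>k\<le>s. c k * xa a ^ k * yb b ^ (s - k)))"
    by (rule heq_mult[OF heq_refl 1])
  also have "U ^ s * (\<Sum>k\<le>s. c k * xa a ^ k * yb b ^ (s - k)) = (\<Sum>k\<le>s. U ^ s * (c k * xa a ^ k * yb b ^ (s - k)))"
    by (simp add: sum_distrib_left)
  finally have "heq q (U ^ s * (g * F)) (\<Sum>k\<le>s. xa a ^ s * (c k * w ^ (s - k) * U ^ k))"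
    using heq_sum[of "{..s}" q, OF 2] by (rule heq_trans) simp
  then have "heq q ((U ^ s * g) * F) (xa a ^ s * (\<Sum>k\<le>s. c k * w ^ (s - k) * U ^ k))"
    by (simp add: sum_distrib_left mult.assoc)
  moreover have "ev P (U ^ s * g) \<noteq> 0" using gc(1) ev_u0[OF hyp_q[OF h], of P] ab
    by (simp add: U_def evalH_ev)
  ultimately show ?thesis using ab by (intro SnI[of P "U ^ s * g"]) simp_all
qed

lemma S_val_ge:
  fixes F :: "'a::field bpoly"
  assumes "Sn q P s F"
  shows "val_ge q P s F"
proof -
  obtain g a' where g: "ev P g \<noteq> 0" "heq q (g * F) (xa (fst P) ^ s * a')"
    using assms unfolding Sn_def by blast
  obtain u where u: "g * F = xa (fst P) ^ s * a' + u * hermH q" using g(2) unfolding heq_iff by blast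
  define c where "c = (\<lambda>k. if k = s then a' else 0 :: 'a bpoly)"
  have "\<forall>k. c k * (Xp - [:[:fst P:]:]) ^ k * (Yp - [:[:snd P:]:]) ^ (s - k) = (if k = s then xa (fst P) ^ s * a' else 0)"
    by (simp add: c_def Xp_minus mult.commute)
  then have "(\<Sum>k\<le>s. c k * (Xp - [:[:fst P:]:]) ^ k * (Yp - [:[:snd P:]:]) ^ (s - k)) = (\<Sum>k\<le>s. if k = s then xa (fst P) ^ s * a' else 0)"
    by simp
  also have "\<dots> = xa (fst P) ^ s * a'" by simp
  finally have "(\<Sum>k\<le>s. c k * (Xp - [:[:fst P:]:]) ^ k * (Yp - [:[:snd P:]:]) ^ (s - k)) = xa (fst P) ^ s * a'" .
  then show ?thesis unfolding val_ge_def using g(1) u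
    by (intro exI[of _ g] exI[of _ c] exI[of _ u]) (simp add: evalH_ev)
qed


section \<open>Counting solutions of the trace equation\<close>

lemma card_le_q_roots:
  fixes p :: "'a::{finite,field} poly"
  assumes "coeff p q = 1" "degree p \<le> q"
  shows "card {x. poly p x = 0} \<le> q"
proof -
  have "p \<noteq> 0" using assms(1) by auto
  then show ?thesis using card_poly_roots_bound[of p] assms(2) by linarith
qed

lemma fiber_count:
  fixes c :: "'a::{finite,field}"
  assumes h: "hyp q TYPE('a)" and c: "c ^ q = c"
  shows "card {b::'a. b ^ q + b = c} = q"
proof -
  have q: "2 \<le> q" using hyp_q[OF h] .
  define T where "T b = b ^ q + b" for b :: 'a
  define fib where "fib c = {b. T b = c}" for c
  define K where "K = fib 0"
  have fib_le: "card (fib d) \<le> q" for d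
  proof -
    have "fib d = {x. poly (monom 1 q + [:-d, 1:]) x = 0}"
      unfolding fib_def T_def by (auto simp: poly_monom algebra_simps)
    moreover have "card {x. poly (monom 1 q + [:-d, 1:]) x = 0} \<le> q"
    proof (rule card_le_q_roots)
      show "coeff (monom 1 q + [:-d, 1:]) q = (1::'a)" using q by (simp add: coeff_pCons split: nat.splits)
      show "degree (monom 1 q + [:-d, 1:] :: 'a poly) \<le> q" using q by (intro degree_add_le) (simp_all add: degree_monom_le)
    qed
    ultimately show ?thesis by simp
  qed
  define Fq where "Fq = {d::'a. d ^ q = d}"
  have Fq_le: "card Fq \<le> q"
  proof -
    have "Fq = {x. poly (monom 1 q + [:0, -1:]) x = 0}"
      unfolding Fq_def by (auto simp: poly_monom algebra_simps)
    moreover have "card {x. poly (monom 1 q + [:0, -1:]) x = (0::'a)} \<le> q"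
    proof (rule card_le_q_roots)
      show "coeff (monom 1 q + [:0, -1:]) q = (1::'a)" using q by (simp add: coeff_pCons split: nat.splits)
      show "degree (monom 1 q + [:0, -1:] :: 'a poly) \<le> q" using q by (intro degree_add_le) (simp_all add: degree_monom_le)
    qed
    ultimately show ?thesis by simp
  qed
  have T_add: "T (x - y) = T x - T y" for x y
    unfolding T_def using frobA_diff[OF h, of x y] by (simp add: algebra_simps)
  have T_Fq: "T b \<in> Fq" for b
  proof -
    have "(T b) ^ q = (b ^ q) ^ q + b ^ q" unfolding T_def by (rule frobA[OF h])
    also have "(b ^ q) ^ q = b" using power_q2[OF h, of b] by (simp add: power_mult[symmetric] power2_eq_square)
    finally show ?thesis unfolding Fq_def T_def by (simp add: add.commute)
  qed
  have fib_trans: "fib (T b0) = (\<lambda>\<beta>. \<beta> + b0) ` K" for b0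
  proof
    show "fib (T b0) \<subseteq> (\<lambda>\<beta>. \<beta> + b0) ` K"
    proof
      fix b assume "b \<in> fib (T b0)"
      then have "T (b - b0) = 0" using T_add unfolding fib_def by simp
      then have "b - b0 \<in> K" unfolding K_def fib_def by simp
      then show "b \<in> (\<lambda>\<beta>. \<beta> + b0) ` K" by (intro image_eqI[of _ _ "b - b0"]) simp_all
    qed
    show "(\<lambda>\<beta>. \<beta> + b0) ` K \<subseteq> fib (T b0)"
    proof
      fix b assume "b \<in> (\<lambda>\<beta>. \<beta> + b0) ` K"
      then obtain \<beta> where "\<beta> \<in> K" "b = \<beta> + b0" by blast
      then have "T (b - b0) = 0" unfolding K_def fib_def by simp
      then show "b \<in> fib (T b0)" using T_add unfolding fib_def by simp
    qed
  qed
  have card_fib: "card (fib (T b0)) = card K" for b0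
    unfolding fib_trans by (rule card_image) (simp add: inj_on_def)
  define C where "C = fib ` range T"
  have "card K * card C = card (\<Union>C)"
  proof (rule card_partition)
    fix x assume "x \<in> C" then show "card x = card K" unfolding C_def using card_fib by auto
  next
    fix c1 c2 assume "c1 \<in> C" "c2 \<in> C" "c1 \<noteq> c2"
    then show "c1 \<inter> c2 = {}" unfolding C_def fib_def by auto
  qed simp_all
  moreover have "\<Union>C = UNIV" unfolding C_def fib_def by auto
  ultimately have prod: "card K * card C = q * q" using hyp_card[OF h] by (simp add: power2_eq_square)
  have cC: "card C \<le> q"
  proof -
    have "card C \<le> card (range T)" unfolding C_def by (rule card_image_le) simp
    also have "\<dots> \<le> card Fq" using T_Fq by (intro card_mono) auto
    finally show ?thesis using Fq_le by linarith
  qed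
  have cK: "card K \<le> q" unfolding K_def by (rule fib_le)
  have cK': "card K = q"
  proof (rule ccontr)
    assume "card K \<noteq> q"
    then have "card K < q" using cK by simp
    have "card K * card C \<le> card K * q" by (rule mult_le_mono2[OF cC])
    also have "card K * q < q * q" using \<open>card K < q\<close> q by (intro mult_less_mono1) simp_all
    finally have "card K * card C < q * q" .
    then show False using prod by simp
  qed
  have cC': "card C = q"
  proof (rule ccontr)
    assume "card C \<noteq> q"
    then have "card C < q" using cC by simp
    then have "q * card C < q * q" using q by (intro mult_less_mono2) simp_all
    then have "card K * card C < q * q" using cK' by simp
    then show False using prod by simp
  qed
  have "card Fq \<le> card (range T)"
  proof -
    have "card C \<le> card (range T)" unfolding C_def by (rule card_image_le) simp
    then show ?thesis using cC' Fq_le by linarith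
  qed
  then have "range T = Fq" using T_Fq by (intro card_seteq) auto
  then have "c \<in> range T" using c unfolding Fq_def by auto
  then obtain b0 where "c = T b0" by blast
  then have "card (fib c) = q" using card_fib cK' by simp
  then show ?thesis unfolding fib_def T_def by simp
qed

lemma norm_in_Fq:
  fixes a :: "'a::{finite,field}"
  assumes h: "hyp q TYPE('a)"
  shows "(a ^ (q + 1)) ^ q = a ^ (q + 1)"
proof -
  have "(a ^ (q + 1)) ^ q = a ^ (q * q) * a ^ q" by (simp add: power_mult[symmetric] power_add algebra_simps)
  also have "a ^ (q * q) = a" using power_q2[OF h, of a] by (simp add: power2_eq_square)
  finally show ?thesis by simp
qed

lemma fiber_pts:
  fixes a :: "'a::{finite,field}"
  assumes h: "hyp q TYPE('a)"
  shows "card {b::'a. (a, b) \<in> hpts q} = q"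
  using fiber_count[OF h norm_in_Fq[OF h, of a]] by (simp add: hpts_def)

section \<open>Functions vanishing at all points\<close>

definition GX :: "nat \<Rightarrow> 'a::comm_ring_1 poly" where
  "GX q = [:0, 1:] ^ (q ^ 2) - [:0, 1:]"

lemma Gp_GX: "Gp q = [:GX q:]"
  by (simp add: Gp_def GX_def Xp_def poly_const_pow)

lemma poly_GX:
  fixes a :: "'a::{finite,field}"
  assumes h: "hyp q TYPE('a)"
  shows "poly (GX q) a = 0"
  using power_q2[OF h, of a] by (simp add: GX_def)

lemma coeff_GX:
  assumes "2 \<le> q"
  shows "coeff (GX q :: 'a::comm_ring_1 poly) (q ^ 2) = 1" "degree (GX q :: 'a poly) = q ^ 2"
proof -
  have "2 ^ 2 \<le> q ^ 2" using assms by (rule power_mono) simp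
  then have q2: "q ^ 2 \<ge> 4" by simp
  have "GX q = monom (1::'a) (q ^ 2) + [:0, -1:]" by (simp add: GX_def monom_altdef)
  then show "coeff (GX q :: 'a poly) (q ^ 2) = 1" using q2 assms by (simp add: coeff_pCons split: nat.splits)
  show "degree (GX q :: 'a poly) = q ^ 2"
  proof (rule antisym)
    have "GX q = monom (1::'a) (q ^ 2) + [:0, -1:]" by (simp add: GX_def monom_altdef)
    then show "degree (GX q :: 'a poly) \<le> q ^ 2" using q2
      by (simp only:) (intro degree_add_le, simp_all add: degree_monom_le)
    show "q ^ 2 \<le> degree (GX q :: 'a poly)"
      using \<open>coeff (GX q :: 'a poly) (q ^ 2) = 1\<close> by (intro le_degree) simp
  qed
qed

lemma all_roots_dvd:
  fixes c :: "'a::{finite,field} poly"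
  assumes h: "hyp q TYPE('a)" and z: "\<And>a. poly c a = 0"
  shows "GX q dvd c"
proof -
  have q: "2 \<le> q" using hyp_q[OF h] .
  define r where "r = c mod GX q"
  have GX0: "GX q \<noteq> (0 :: 'a poly)" using coeff_GX(1)[OF q, where 'a='a] by auto
  have "c = GX q * (c div GX q) + r" unfolding r_def by simp
  then have pr: "poly r a = 0" for a using z[of a] poly_GX[OF h, of a] by (metis add_0 mult_zero_left poly_add poly_mult)
  have "r = 0"
  proof (rule ccontr)
    assume r0: "r \<noteq> 0"
    then have "degree r < q ^ 2" using degree_mod_less'[OF GX0, of c] coeff_GX(2)[OF q, where 'a='a] r_def by simp
    moreover have "card {x. poly r x = 0} \<le> degree r" by (rule card_poly_roots_bound[OF r0])
    moreover have "{x. poly r x = 0} = UNIV" using pr by auto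
    ultimately show False using hyp_card[OF h] by simp
  qed
  then show ?thesis unfolding r_def by (simp add: mod_eq_0_iff_dvd)
qed

lemma VG1:
  fixes F :: "'a::{finite,field} bpoly"
  assumes h: "hyp q TYPE('a)" and z: "\<And>P. P \<in> hpts q \<Longrightarrow> ev P F = 0"
  shows "\<exists>F1. heq q F (Gp q * F1)"
proof -
  have q: "2 \<le> q" using hyp_q[OF h] .
  define r where "r = hred q F"
  have Fr: "heq q F r" unfolding r_def by (rule hred_props(2)[OF q])
  have rR: "degree r < q" using hred_props(1)[OF q, of F] unfolding r_def inR_def .
  have zr: "ev P r = 0" if "P \<in> hpts q" for P using z[OF that] heq_ev[OF Fr that] by simp
  have phi0: "phi a r = 0" for a
  proof (rule ccontr)
    assume ne: "phi a r \<noteq> 0"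
    have "{b. (a, b) \<in> hpts q} \<subseteq> {b. poly (phi a r) b = 0}"
      using zr by (auto simp: poly_phi)
    then have "q \<le> card {b. poly (phi a r) b = 0}"
      using fiber_pts[OF h, of a] by (metis card_mono finite)
    also have "\<dots> \<le> degree (phi a r)" by (rule card_poly_roots_bound[OF ne])
    also have "\<dots> \<le> degree r" unfolding phi_def by (rule map_poly_degree_leq)
    finally show False using rR by simp
  qed
  have dv: "GX q dvd coeff r j" for j
    using phi0 by (intro all_roots_dvd[OF h]) (metis coeff_phi coeff_0)
  define F1 where "F1 = map_poly (\<lambda>c. c div GX q) r"
  have "r = Gp q * F1"
  proof (rule poly_eqI)
    fix n
    have m: "Gp q * F1 = smult (GX q) F1" unfolding Gp_GX by simp
    have "coeff (Gp q * F1) n = GX q * (coeff r n div GX q)"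
      unfolding m coeff_smult by (simp only: F1_def coeff_map_poly div_0)
    also have "\<dots> = coeff r n" using dv[of n] by simp
    finally show "coeff r n = coeff (Gp q * F1) n" by simp
  qed
  then show ?thesis using Fr by blast
qed

lemma G_factor:
  fixes a :: "'a::{finite,field}"
  assumes h: "hyp q TYPE('a)"
  shows "\<exists>W. Gp q = xa a * [:W:] \<and> poly W a \<noteq> 0"
proof -
  have q: "2 \<le> q" using hyp_q[OF h] .
  define N where "N = q ^ 2"
  define S where "S = (\<Sum>i<N. [:a:] ^ (N - Suc i) * [:0, 1::'a:] ^ i)"
  have 1: "[:0, 1:] ^ N - [:a:] ^ N = ([:0, 1:] - [:a:]) * S"
    unfolding S_def by (rule power_diff_sumr2)
  have aN: "[:a:] ^ N = [:a:]" using power_q2[OF h, of a] unfolding N_def by (simp add: poly_const_pow)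
  have lin: "[:0, 1:] - [:a:] = [:-a, 1::'a:]" by simp
  have GXf: "GX q = [:-a, 1:] * (S - 1)"
  proof -
    have "GX q = ([:0, 1:] ^ N - [:a:]) - ([:0, 1:] - [:a:])"
      unfolding GX_def N_def by simp
    also have "\<dots> = ([:0, 1:] ^ N - [:a:] ^ N) - ([:0, 1:] - [:a:])" unfolding aN ..
    also have "\<dots> = [:-a, 1:] * (S - 1)" unfolding 1 lin right_diff_distrib mult_1_right ..
    finally show ?thesis .
  qed
  have "poly S a = (\<Sum>i<N. a ^ (N - Suc i) * a ^ i)" unfolding S_def by (simp add: poly_sum)
  also have "\<dots> = (\<Sum>i<N. a ^ (N - 1))"
    by (intro sum.cong refl) (simp flip: power_add)
  also have "\<dots> = of_nat N * a ^ (N - 1)" by simp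
  also have "(of_nat N :: 'a) = 0" unfolding N_def using q_zero[OF h] by simp
  finally have "poly (S - 1) a = -1" by simp
  moreover have "Gp q = xa a * [:S - 1:]" unfolding Gp_GX GXf xa_def by simp
  ultimately show ?thesis by (intro exI[of _ "S - 1"]) simp
qed

lemma VG:
  fixes F :: "'a::{finite,field} bpoly"
  assumes h: "hyp q TYPE('a)" and S: "\<And>P. P \<in> hpts q \<Longrightarrow> Sn q P n F"
  shows "\<exists>t. heq q F (Gp q ^ n * t)"
  using S
proof (induction n arbitrary: F)
  case 0
  then show ?case by (intro exI[of _ F]) simp
next
  case (Suc n)
  have q: "2 \<le> q" using hyp_q[OF h] .
  obtain F1 where F1: "heq q F (Gp q * F1)" using VG1[OF h S_ev[OF Suc.prems]] by blast
  have "Sn q P n F1" if P: "P \<in> hpts q" for P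
  proof -
    obtain W where W: "Gp q = xa (fst P) * [:W:]" "poly W (fst P) \<noteq> 0" using G_factor[OF h] by blast
    have "Sn q P (Suc n) (Gp q * F1)" using S_cong[OF Suc.prems[OF P] F1] .
    then have "Sn q P (Suc n) (xa (fst P) * ([:W:] * F1))" using W(1) by (simp add: mult.assoc)
    then have "Sn q P n ([:W:] * F1)" by (rule S_cancel_x[OF q])
    moreover have "ev P [:W:] \<noteq> 0" using W(2) by simp
    ultimately show ?thesis using S_cancel_unit[of P "[:W:]" q n F1] by blast
  qed
  then obtain t where t: "heq q F1 (Gp q ^ n * t)" using Suc.IH by blast
  have "heq q F (Gp q * (Gp q ^ n * t))" using heq_trans[OF F1 heq_mult[OF heq_refl t]] .
  then show ?case by (intro exI[of _ t]) (simp add: mult.assoc)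
qed

lemma S_poly_dvd:
  fixes c :: "'a::{finite,field} poly"
  assumes h: "hyp q TYPE('a)" and P: "P \<in> hpts q" and S: "Sn q P n [:c:]"
  shows "[:-fst P, 1:] ^ n dvd c"
  using S
proof (induction n arbitrary: c)
  case 0 then show ?case by simp
next
  case (Suc n)
  have "ev P [:c:] = 0" by (rule S_ev[OF Suc.prems P])
  then have "poly c (fst P) = 0" by simp
  then obtain c' where c': "c = [:-fst P, 1:] * c'" unfolding poly_eq_0_iff_dvd by blast
  have "[:c:] = xa (fst P) * [:c':]" unfolding c' xa_def by simp
  then have "Sn q P (Suc n) (xa (fst P) * [:c':])" using Suc.prems by simp
  then have "Sn q P n [:c':]" by (rule S_cancel_x[OF hyp_q[OF h]])
  then have "[:-fst P, 1:] ^ n dvd c'" by (rule Suc.IH)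
  then show ?case unfolding c' power_Suc by (rule mult_dvd_mono[OF dvd_refl])
qed


section \<open>The degree map chi\<close>

definition chi :: "nat \<Rightarrow> 'a::comm_ring_1 bpoly \<Rightarrow> 'a poly" where
  "chi q p = poly (map_poly (\<lambda>c. pcompose c (monom 1 q)) p) (monom 1 (q + 1))"

lemma map_pc_add: "map_poly (\<lambda>c. pcompose c m) (p + r) = map_poly (\<lambda>c. pcompose c m) p + map_poly (\<lambda>c. pcompose c m) r"
  by (rule map_poly_add_hom) (simp_all add: pcompose_add)

lemma map_pc_mult: "map_poly (\<lambda>c. pcompose c m) (p * r) = map_poly (\<lambda>c. pcompose c m) p * map_poly (\<lambda>c. pcompose c (m :: 'a::comm_ring_1 poly)) r"
  by (rule map_poly_mult_hom) (simp_all add: pcompose_add pcompose_mult)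

lemma map_pc_minus: "map_poly (\<lambda>c. pcompose c m) (- p) = - map_poly (\<lambda>c. pcompose c (m :: 'a::comm_ring_1 poly)) p"
  by (rule poly_eqI) (simp add: coeff_map_poly pcompose_uminus)

lemma chi_add [simp]: "chi q (a + b) = chi q a + chi q b"
  by (simp add: chi_def map_pc_add)

lemma chi_mult [simp]: "chi q (a * b) = chi q a * chi q (b :: 'a::comm_ring_1 bpoly)"
  by (simp add: chi_def map_pc_mult)

lemma chi_minus [simp]: "chi q (- a) = - chi q (a :: 'a::comm_ring_1 bpoly)"
  by (simp add: chi_def map_pc_minus)

lemma chi_diff [simp]: "chi q (a - b) = chi q a - chi q (b :: 'a::comm_ring_1 bpoly)"
  using chi_add[of q a "- b"] by simp

lemma chi_0 [simp]: "chi q 0 = 0"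
  by (simp add: chi_def)

lemma chi_1 [simp]: "chi q (1 :: 'a::comm_ring_1 bpoly) = 1"
  by (simp add: chi_def pcompose_1)

lemma chi_power [simp]: "chi q (a ^ n) = chi q (a :: 'a::comm_ring_1 bpoly) ^ n"
  by (induction n) simp_all

lemma chi_Yp: "chi q (Yp :: 'a::comm_ring_1 bpoly) = monom 1 (q + 1)"
  by (simp add: chi_def Yp_def map_poly_pCons pcompose_1)

lemma chi_Xp: "chi q (Xp :: 'a::comm_ring_1 bpoly) = monom 1 q"
  by (simp add: chi_def Xp_def map_poly_pCons pcompose_pCons pcompose_1)

lemma chi_hermH: "chi q (hermH q :: 'a::comm_ring_1 bpoly) = monom 1 (q + 1)"
proof -
  have "chi q (hermH q :: 'a bpoly) = monom 1 (q + 1) ^ q + monom 1 (q + 1) - monom 1 q ^ (q + 1)"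
    by (simp add: hermH_def chi_Xp chi_Yp del: power_Suc)
  also have "monom (1::'a) (q + 1) ^ q = monom 1 q ^ (q + 1)"
    by (simp add: monom_power mult.commute del: power_Suc)
  finally show ?thesis by simp
qed

lemma poly_altdef_le:
  fixes p :: "'a::comm_semiring_1 poly"
  assumes "degree p \<le> N"
  shows "poly p x = (\<Sum>i\<le>N. coeff p i * x ^ i)"
proof -
  have "poly p x = (\<Sum>i\<le>degree p. coeff p i * x ^ i)" by (rule poly_altdef)
  also have "\<dots> = (\<Sum>i\<le>N. coeff p i * x ^ i)"
    by (rule sum.mono_neutral_left) (use assms in \<open>auto simp: coeff_eq_0\<close>)
  finally show ?thesis .
qed

lemma pcompose_monom_expl:
  fixes c :: "'a::comm_ring_1 poly"
  shows "pcompose c (monom 1 q) = (\<Sum>i\<le>degree c. monom (coeff c i) (i * q))"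
proof -
  have "pcompose c (monom 1 q) = poly (map_poly (\<lambda>x. [:x:]) c) (monom 1 q)" by (rule pcompose_altdef)
  also have "\<dots> = (\<Sum>i\<le>degree c. coeff (map_poly (\<lambda>x. [:x:]) c) i * monom 1 q ^ i)"
    by (rule poly_altdef_le) (rule map_poly_degree_leq)
  also have "\<dots> = (\<Sum>i\<le>degree c. monom (coeff c i) (i * q))"
    by (intro sum.cong refl) (simp add: coeff_map_poly monom_power smult_monom mult.commute)
  finally show ?thesis .
qed

lemma chi_expl:
  "chi q p = (\<Sum>j\<le>degree p. \<Sum>i\<le>degree (coeff p j). monom (hcoeff p i j) (hw q i j))"
proof -
  have "chi q p = (\<Sum>j\<le>degree p. coeff (map_poly (\<lambda>c. pcompose c (monom 1 q)) p) j * monom 1 (q + 1) ^ j)"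
    unfolding chi_def by (rule poly_altdef_le) (rule map_poly_degree_leq)
  also have "\<dots> = (\<Sum>j\<le>degree p. pcompose (coeff p j) (monom 1 q) * monom 1 ((q + 1) * j))"
    by (intro sum.cong refl) (simp add: coeff_map_poly monom_power)
  also have "\<dots> = (\<Sum>j\<le>degree p. \<Sum>i\<le>degree (coeff p j). monom (hcoeff p i j) (hw q i j))"
    by (intro sum.cong refl)
       (simp add: pcompose_monom_expl sum_distrib_right sum_distrib_left mult_monom hcoeff_def hw_def algebra_simps)
  finally show ?thesis .
qed

lemma degree_chi: "degree (chi q p) \<le> wt q p"
  unfolding chi_expl
proof (intro degree_sum_le)
  fix j i
  show "degree (monom (hcoeff p i j) (hw q i j)) \<le> wt q p"
  proof (cases "hcoeff p i j = 0")
    case True then show ?thesis by simp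
  next
    case False then show ?thesis using degree_monom_le[of "hcoeff p i j" "hw q i j"] wt_ge[OF False, of q] by linarith
  qed
qed simp_all

lemma hw_inj:
  assumes "j < q" "j' < q" "hw q i j = hw q i' j'"
  shows "i = i' \<and> j = j'"
proof -
  have e: "hw q i j = j + (i + j) * q" for i j by (simp add: hw_def algebra_simps)
  have "hw q i j mod q = j" "hw q i' j' mod q = j'" using assms(1,2) unfolding e by simp_all
  then have jj: "j = j'" using assms(3) by simp
  then have "(i + j) * q = (i' + j) * q" using assms(3) unfolding e by simp
  then have "i = i'" using assms(1) by simp
  then show ?thesis using jj by simp
qed

lemma coeff_chi_top:
  fixes p :: "'a::comm_ring_1 bpoly"
  assumes R: "inR q p" and p0: "p \<noteq> 0"
  shows "coeff (chi q p) (wt q p) \<noteq> 0"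
proof -
  obtain i0 j0 where ij: "hcoeff p i0 j0 \<noteq> 0" "wt q p = hw q i0 j0" using wt_attained[OF p0] by blast
  have b: "j0 \<le> degree p" "i0 \<le> degree (coeff p j0)" using hcoeff_nz_bound[OF ij(1)] by simp_all
  have dq: "degree p < q" using R by (simp add: inR_def)
  have inner: "(\<Sum>i\<le>degree (coeff p j). if hw q i j = hw q i0 j0 then hcoeff p i j else 0) =
               (if j = j0 then hcoeff p i0 j0 else 0)" if "j \<le> degree p" for j
  proof -
    have "(\<Sum>i\<le>degree (coeff p j). if hw q i j = hw q i0 j0 then hcoeff p i j else 0) =
          (\<Sum>i\<le>degree (coeff p j). if j = j0 \<and> i = i0 then hcoeff p i0 j0 else 0)"
    proof (intro sum.cong refl)
      fix i
      have "hw q i j = hw q i0 j0 \<longleftrightarrow> (j = j0 \<and> i = i0)"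
        using hw_inj[of j q j0 i i0] that dq b by auto
      then show "(if hw q i j = hw q i0 j0 then hcoeff p i j else 0) = (if j = j0 \<and> i = i0 then hcoeff p i0 j0 else 0)"
        by auto
    qed
    also have "\<dots> = (if j = j0 then hcoeff p i0 j0 else 0)"
      using b by (cases "j = j0") (simp_all add: sum.delta)
    finally show ?thesis .
  qed
  have "coeff (chi q p) (wt q p) =
        (\<Sum>j\<le>degree p. \<Sum>i\<le>degree (coeff p j). if hw q i j = hw q i0 j0 then hcoeff p i j else 0)"
    unfolding chi_expl ij(2) by (simp add: coeff_sum eq_commute)
  also have "\<dots> = (\<Sum>j\<le>degree p. if j = j0 then hcoeff p i0 j0 else 0)"
    by (intro sum.cong refl inner) simp
  also have "\<dots> = hcoeff p i0 j0" using b by (simp add: sum.delta)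
  finally show ?thesis using ij(1) by simp
qed

lemma degree_chi_eq:
  fixes p :: "'a::comm_ring_1 bpoly"
  assumes R: "inR q p" and p0: "p \<noteq> 0"
  shows "degree (chi q p) = wt q p" "chi q p \<noteq> 0"
proof -
  show "degree (chi q p) = wt q p"
    using degree_chi[of q p] le_degree[OF coeff_chi_top[OF R p0]] by simp
  show "chi q p \<noteq> 0" using coeff_chi_top[OF R p0] by auto
qed

lemma hred_eq:
  fixes p :: "'a::idom bpoly"
  assumes q: "2 \<le> q" and "inR q r" "heq q p r"
  shows "hred q p = r"
proof (rule red_unique[OF q hred_props(1)[OF q] assms(2)])
  show "heq q (hred q p) r" using heq_trans[OF heq_sym[OF hred_props(2)[OF q]] assms(3)] .
qed

lemma hred_mult_nz:
  fixes a b :: "'a::idom bpoly"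
  assumes q: "2 \<le> q" and R: "inR q a" "inR q b" and nz: "a \<noteq> 0" "b \<noteq> 0"
  shows "hred q (a * b) \<noteq> 0"
proof -
  obtain u where u: "inR q (a * b - u * hermH q)" "wt q (a * b - u * hermH q) \<le> wt q (a * b)"
      "u = 0 \<or> wt q u + q * (q + 1) \<le> wt q (a * b)"
    using red_wt[OF q] by blast
  have "hred q (a * b) = a * b - u * hermH q"
    by (rule hred_eq[OF q u(1)]) (simp add: heq_def)
  moreover have "chi q (a * b - u * hermH q) \<noteq> 0"
  proof -
    define A where "A = chi q a * chi q b"
    define B where "B = chi q u * monom 1 (q + 1)"
    have A0: "A \<noteq> 0" unfolding A_def using degree_chi_eq(2)[OF R(1) nz(1)] degree_chi_eq(2)[OF R(2) nz(2)] by simp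
    have dA: "degree A = wt q a + wt q b" unfolding A_def
      using degree_mult_eq[OF degree_chi_eq(2)[OF R(1) nz(1)] degree_chi_eq(2)[OF R(2) nz(2)]]
        degree_chi_eq(1)[OF R(1) nz(1)] degree_chi_eq(1)[OF R(2) nz(2)] by simp
    have e: "chi q (a * b - u * hermH q) = A - B" unfolding A_def B_def by (simp add: chi_hermH)
    show ?thesis
    proof (cases "u = 0")
      case True then show ?thesis using e A0 by (simp add: B_def)
    next
      case False
      then have wu: "wt q u + q * (q + 1) \<le> wt q (a * b)" using u(3) by simp
      have "degree B \<le> degree (chi q u) + degree (monom (1::'a) (q + 1))" unfolding B_def by (rule degree_mult_le)
      also have "\<dots> \<le> wt q u + (q + 1)" using degree_chi[of q u] by (simp add: degree_monom_eq)
      also have "\<dots> < wt q u + q * (q + 1)"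
      proof -
        obtain k where k: "q = k + 2" using q by (metis add.commute le_Suc_ex)
        have "q + 1 < q * (q + 1)" unfolding k by (simp add: algebra_simps)
        then show ?thesis by simp
      qed
      also have "\<dots> \<le> wt q a + wt q b" using wu wt_mult[of q a b] by linarith
      finally have "degree B < degree A" using dA by simp
      show ?thesis unfolding e
      proof
        assume "A - B = 0"
        then have "A = B" by simp
        then show False using \<open>degree B < degree A\<close> by simp
      qed
    qed
  qed
  ultimately show ?thesis by (metis chi_0)
qed


section \<open>Conjugation Y -> Y + beta\<close>

definition sig :: "'a::comm_ring_1 \<Rightarrow> 'a bpoly \<Rightarrow> 'a bpoly" where
  "sig \<beta> p = pcompose p [:[:\<beta>:], 1:]"

lemma sig_add [simp]: "sig \<beta> (a + b) = sig \<beta> a + sig \<beta> b" by (simp add: sig_def pcompose_add)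
lemma sig_diff [simp]: "sig \<beta> (a - b) = sig \<beta> a - sig \<beta> b" by (simp add: sig_def pcompose_diff)
lemma sig_mult [simp]: "sig \<beta> (a * b) = sig \<beta> a * sig \<beta> b" by (simp add: sig_def pcompose_mult)
lemma sig_power [simp]: "sig \<beta> (a ^ n) = sig \<beta> a ^ n" by (induction n) (simp_all add: sig_def pcompose_1 pcompose_mult)
lemma sig_prod: "sig \<beta> (prod f A) = (\<Prod>x\<in>A. sig \<beta> (f x))" by (simp add: sig_def pcompose_prod)
lemma sig_const [simp]: "sig \<beta> [:c:] = [:c:]" by (simp add: sig_def)
lemma sig_xa [simp]: "sig \<beta> (xa a) = xa a" by (simp add: xa_def)
lemma sig_Xp [simp]: "sig \<beta> Xp = Xp" by (simp add: Xp_def)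
lemma sig_Yp: "sig \<beta> Yp = Yp + [:[:\<beta>:]:]" by (simp add: sig_def Yp_def pcompose_pCons pcompose_1)
lemma sig_1 [simp]: "sig \<beta> 1 = 1" by (simp add: sig_def pcompose_1)

lemma sig_comp: "sig \<gamma> (sig \<beta> p) = sig (\<beta> + \<gamma>) p"
proof -
  have e: "pcompose [:[:\<beta>:], 1:] [:[:\<gamma>:], 1:] = [:[:\<beta> + \<gamma>:], (1 :: 'a poly):]"
    by (simp add: pcompose_pCons pcompose_1)
  show ?thesis unfolding sig_def pcompose_assoc[symmetric] e ..
qed

lemma sig_0 [simp]: "sig 0 p = p"
proof -
  have "[:[:0:], 1:] = ([:0, 1:] :: 'a bpoly)" by simp
  then show ?thesis unfolding sig_def by (metis pcompose_idR)
qed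

lemma ev_sig: "ev (a, b) (sig \<beta> p) = ev (a, b + \<beta>) p"
  by (simp add: ev_def sig_def poly_pcompose add.commute)

lemma degree_sig: "degree (sig \<beta> (p :: 'a::idom bpoly)) = degree p"
  by (simp add: sig_def degree_pcompose)

lemma sig_nz: "p \<noteq> 0 \<Longrightarrow> sig \<beta> (p :: 'a::comm_ring_1 bpoly) \<noteq> 0"
proof
  assume "p \<noteq> 0" "sig \<beta> p = 0"
  moreover have "sig (- \<beta>) (sig \<beta> p) = p" using sig_comp[of "- \<beta>" \<beta> p] by simp
  ultimately show False by (simp add: sig_def)
qed

lemma sig_hermH:
  fixes \<beta> :: "'a::{finite,field}"
  assumes h: "hyp q TYPE('a)" and b: "\<beta> ^ q + \<beta> = 0"
  shows "sig \<beta> (hermH q) = hermH q"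
proof -
  have "sig \<beta> (hermH q) = (Yp + [:[:\<beta>:]:]) ^ q + (Yp + [:[:\<beta>:]:]) - Xp ^ (q + 1)"
    by (simp add: hermH_def sig_Yp del: power_Suc)
  also have "(Yp + [:[:\<beta>:]:]) ^ q = Yp ^ q + [:[:\<beta> ^ q:]:]"
    using frobB[OF h, of Yp "[:[:\<beta>:]:]"] by (simp add: poly_const_pow)
  finally have "sig \<beta> (hermH q) = hermH q + [:[:\<beta> ^ q + \<beta>:]:]"
    by (simp add: hermH_def algebra_simps del: power_Suc)
  then show ?thesis using b by simp
qed

lemma sig_heq:
  fixes \<beta> :: "'a::{finite,field}"
  assumes h: "hyp q TYPE('a)" and b: "\<beta> ^ q + \<beta> = 0" and e: "heq q x y"
  shows "heq q (sig \<beta> x) (sig \<beta> y)"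
proof -
  obtain u where "x = y + u * hermH q" using e unfolding heq_iff by blast
  then have "sig \<beta> x = sig \<beta> y + sig \<beta> u * hermH q" using sig_hermH[OF h b] by simp
  then show ?thesis unfolding heq_iff by blast
qed

lemma wt_sig:
  fixes p :: "'a::comm_ring_1 bpoly"
  shows "wt q (sig \<beta> p) \<le> wt q p"
proof -
  define r where "r = ([:[:\<beta>:], 1:] :: 'a bpoly)"
  have wr: "wt q r \<le> q + 1"
  proof -
    have "r = Yp + [:[:\<beta>:]:]" by (simp add: r_def Yp_def)
    then show ?thesis using wt_add[of q Yp "[:[:\<beta>:]:]"] wt_Yp[of q, where 'a='a] by simp
  qed
  have "sig \<beta> p = poly (map_poly (\<lambda>x. [:x:]) p) r" unfolding sig_def r_def by (rule pcompose_altdef)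
  also have "\<dots> = (\<Sum>j\<le>degree p. coeff (map_poly (\<lambda>x. [:x:]) p) j * r ^ j)"
    by (rule poly_altdef_le) (rule map_poly_degree_leq)
  also have "\<dots> = (\<Sum>j\<le>degree p. [:coeff p j:] * r ^ j)" by (simp add: coeff_map_poly)
  finally have e: "sig \<beta> p = (\<Sum>j\<le>degree p. [:coeff p j:] * r ^ j)" .
  show ?thesis unfolding e
  proof (rule wt_sum)
    fix j
    show "wt q ([:coeff p j:] * r ^ j) \<le> wt q p"
    proof (cases "coeff p j = 0")
      case True then show ?thesis by simp
    next
      case False
      have "wt q ([:coeff p j:] * r ^ j) \<le> wt q [:coeff p j:] + wt q (r ^ j)" by (rule wt_mult)
      also have "\<dots> \<le> q * degree (coeff p j) + j * (q + 1)"
        using wt_const_poly[of q "coeff p j"] wt_power[of q r j] wr mult_le_mono2[OF wr, of j]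
        by linarith
      also have "\<dots> \<le> wt q p" by (rule col_le[OF False])
      finally show ?thesis .
    qed
  qed
qed

lemma S_sig:
  fixes \<beta> :: "'a::{finite,field}"
  assumes h: "hyp q TYPE('a)" and b: "\<beta> ^ q + \<beta> = 0" and S: "Sn q (a, c) n F"
  shows "Sn q (a, c - \<beta>) n (sig \<beta> F)"
proof -
  obtain g a' where g: "ev (a, c) g \<noteq> 0" "heq q (g * F) (xa a ^ n * a')" using S unfolding Sn_def by auto
  have "heq q (sig \<beta> g * sig \<beta> F) (xa a ^ n * sig \<beta> a')" using sig_heq[OF h b g(2)] by simp
  moreover have "ev (a, c - \<beta>) (sig \<beta> g) \<noteq> 0" using g(1) by (simp add: ev_sig)
  ultimately show ?thesis by (intro SnI[of _ "sig \<beta> g"]) simp_all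
qed

section \<open>The lower bound\<close>

definition Kq :: "nat \<Rightarrow> 'a::{finite,field} set" where
  "Kq q = {\<beta>. \<beta> ^ q + \<beta> = 0}"

lemma card_Kq:
  assumes h: "hyp q TYPE('a::{finite,field})"
  shows "card (Kq q :: 'a set) = q"
  unfolding Kq_def using fiber_count[OF h, of 0] hyp_q[OF h] by simp

lemma Kq_diff:
  assumes h: "hyp q TYPE('a::{finite,field})" and "\<beta> \<in> Kq q" "\<gamma> \<in> Kq q"
  shows "\<beta> - \<gamma> \<in> (Kq q :: 'a set)"
proof -
  have e: "(\<beta> - \<gamma>) ^ q + (\<beta> - \<gamma>) = (\<beta> ^ q + \<beta>) - (\<gamma> ^ q + \<gamma>)"
    by (simp add: frobA_diff[OF h] algebra_simps)
  have b: "\<beta> ^ q + \<beta> = 0" "\<gamma> ^ q + \<gamma> = 0" using assms(2,3) unfolding Kq_def by simp_all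
  have "(\<beta> - \<gamma>) ^ q + (\<beta> - \<gamma>) = 0" unfolding e b by simp
  then show ?thesis unfolding Kq_def by simp
qed

lemma Kq_add:
  assumes h: "hyp q TYPE('a::{finite,field})" and "\<beta> \<in> Kq q" "\<gamma> \<in> Kq q"
  shows "\<beta> + \<gamma> \<in> (Kq q :: 'a set)"
proof -
  have e: "(\<beta> + \<gamma>) ^ q + (\<beta> + \<gamma>) = (\<beta> ^ q + \<beta>) + (\<gamma> ^ q + \<gamma>)"
    by (simp add: frobA[OF h] algebra_simps)
  have b: "\<beta> ^ q + \<beta> = 0" "\<gamma> ^ q + \<gamma> = 0" using assms(2,3) unfolding Kq_def by simp_all
  have "(\<beta> + \<gamma>) ^ q + (\<beta> + \<gamma>) = 0" unfolding e b by simp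
  then show ?thesis unfolding Kq_def by simp
qed

lemma hred_cong:
  fixes a b :: "'a::idom bpoly"
  assumes q: "2 \<le> q" and "heq q a b"
  shows "hred q a = hred q b"
  using hred_eq[OF q hred_props(1)[OF q] heq_trans[OF assms(2) hred_props(2)[OF q]]] .

lemma hred_norm_partial:
  fixes L :: "'a::{finite,field} bpoly"
  assumes h: "hyp q TYPE('a)" and R: "inR q L" and L0: "L \<noteq> 0" and A: "finite A"
  shows "hred q (\<Prod>\<beta>\<in>A. sig \<beta> L) \<noteq> 0 \<and> wt q (hred q (\<Prod>\<beta>\<in>A. sig \<beta> L)) \<le> card A * wt q L"
  using A
proof (induction A rule: finite_induct)
  have q: "2 \<le> q" using hyp_q[OF h] .
  case empty
  have "hred q 1 = (1 :: 'a bpoly)" by (rule hred_eq[OF q]) (use q in \<open>simp_all add: inR_def\<close>)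
  then show ?case by simp
next
  have q: "2 \<le> q" using hyp_q[OF h] .
  case (insert x F)
  define P where "P = (\<Prod>\<beta>\<in>F. sig \<beta> L)"
  have eq: "hred q (\<Prod>\<beta>\<in>insert x F. sig \<beta> L) = hred q (sig x L * hred q P)"
    unfolding P_def using insert(1,2)
    by (simp, intro hred_cong[OF q] heq_mult[OF heq_refl] hred_props(2)[OF q])
  have sR: "inR q (sig x L)" using R by (simp add: inR_def degree_sig)
  have "hred q (sig x L * hred q P) \<noteq> 0"
    using hred_mult_nz[OF q sR hred_props(1)[OF q] sig_nz[OF L0]] insert(3) unfolding P_def by simp
  moreover have "wt q (hred q (sig x L * hred q P)) \<le> card (insert x F) * wt q L"
  proof -
    have "wt q (hred q (sig x L * hred q P)) \<le> wt q (sig x L * hred q P)" by (rule hred_wt[OF q])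
    also have "\<dots> \<le> wt q (sig x L) + wt q (hred q P)" by (rule wt_mult)
    also have "\<dots> \<le> wt q L + card F * wt q L" using wt_sig[of q x L] insert(3) unfolding P_def by linarith
    also have "\<dots> = card (insert x F) * wt q L" using insert(1,2) by simp
    finally show ?thesis .
  qed
  ultimately show ?case unfolding eq by simp
qed

lemma lower_bound:
  fixes L :: "'a::{finite,field} bpoly"
  assumes h: "hyp q TYPE('a)" and R: "inR q L" and L0: "L \<noteq> 0"
    and E: "E \<subseteq> hpts q" and S: "\<And>P. P \<in> E \<Longrightarrow> Sn q P s L"
  shows "s * card E \<le> wt q L"
proof -
  have q: "2 \<le> q" using hyp_q[OF h] .
  define K where "K = (Kq q :: 'a set)"
  have finK: "finite K" by simp
  define N where "N = (\<Prod>\<beta>\<in>K. sig \<beta> L)"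
  define r where "r = hred q N"
  have Nr: "heq q N r" unfolding r_def by (rule hred_props(2)[OF q])
  have rR: "inR q r" unfolding r_def by (rule hred_props(1)[OF q])
  have np: "r \<noteq> 0 \<and> wt q r \<le> card K * wt q L"
    unfolding r_def N_def using hred_norm_partial[OF h R L0 finK] .
  have sigN: "sig \<gamma> N = N" if "\<gamma> \<in> K" for \<gamma>
  proof -
    have "sig \<gamma> N = (\<Prod>\<beta>\<in>K. sig (\<beta> + \<gamma>) L)" unfolding N_def sig_prod by (simp add: sig_comp)
    also have "\<dots> = N" unfolding N_def
      by (rule prod.reindex_bij_witness[of _ "\<lambda>\<beta>. \<beta> - \<gamma>" "\<lambda>\<beta>. \<beta> + \<gamma>"])
         (use that in \<open>auto simp: K_def intro: Kq_add[OF h] Kq_diff[OF h]\<close>)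
    finally show ?thesis .
  qed
  have sigr: "sig \<gamma> r = r" if "\<gamma> \<in> K" for \<gamma>
  proof (rule red_unique[OF q])
    show "inR q (sig \<gamma> r)" using rR by (simp add: inR_def degree_sig)
    show "inR q r" by (rule rR)
    have "\<gamma> ^ q + \<gamma> = 0" using that by (simp add: K_def Kq_def)
    then have "heq q (sig \<gamma> r) (sig \<gamma> N)" using sig_heq[OF h _ heq_sym[OF Nr]] by blast
    then show "heq q (sig \<gamma> r) r" unfolding sigN[OF that] using Nr by (rule heq_trans)
  qed
  define c0 where "c0 = coeff r 0"
  have rc: "r = [:c0:]"
  proof (rule ccontr)
    assume ne: "r \<noteq> [:c0:]"
    define p0 where "p0 = r - [:c0:]"
    have p00: "p0 \<noteq> 0" using ne unfolding p0_def by simp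
    have roots: "(\<lambda>\<gamma>. [:\<gamma>:]) ` K \<subseteq> {x. poly p0 x = 0}"
    proof
      fix x assume "x \<in> (\<lambda>\<gamma>. [:\<gamma>:]) ` K"
      then obtain \<gamma> where g: "\<gamma> \<in> K" "x = [:\<gamma>:]" by blast
      have "poly r [:\<gamma>:] = poly (sig \<gamma> r) 0" by (simp add: sig_def poly_pcompose)
      also have "\<dots> = c0" unfolding sigr[OF g(1)] c0_def by (simp add: poly_0_coeff_0)
      finally show "x \<in> {x. poly p0 x = 0}" using g by (simp add: p0_def)
    qed
    have "card ((\<lambda>\<gamma>. [:\<gamma>:]) ` K) = q" using card_Kq[OF h] unfolding K_def
      by (subst card_image) (auto simp: inj_on_def)
    then have "q \<le> card {x. poly p0 x = 0}"
      using card_mono[OF poly_roots_finite[OF p00] roots] by simp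
    also have "\<dots> \<le> degree p0" by (rule card_poly_roots_bound[OF p00])
    also have "\<dots> < q" unfolding p0_def using rR q by (intro degree_diff_less) (simp_all add: inR_def)
    finally show False by simp
  qed
  have c00: "c0 \<noteq> 0" using np rc by auto
  have "degree c0 * q \<le> wt q r"
  proof -
    have "hcoeff r (degree c0) 0 \<noteq> 0" using c00 unfolding rc hcoeff_def by simp
    from wt_ge[OF this, of q] show ?thesis by (simp add: hw_def)
  qed
  then have degc: "degree c0 \<le> wt q L" using np card_Kq[OF h] q unfolding K_def
    by (metis le_trans mult.commute mult_le_cancel1 not_less_eq_eq not_numeral_le_zero le0 less_eq_Suc_le)
  define Ea where "Ea a = {b. (a, b) \<in> E}" for a
  have finE: "finite E" by simp
  have dv: "[:-a, 1:] ^ (s * card (Ea a)) dvd c0" if aE: "a \<in> fst ` E" for a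
  proof -
    obtain b0 where b0: "(a, b0) \<in> E" using aE by force
    have Q: "(a, b0) \<in> hpts q" using b0 E by auto
    define B where "B = (\<lambda>b. b - b0) ` Ea a"
    have BK: "B \<subseteq> K"
    proof
      fix \<beta> assume "\<beta> \<in> B"
      then obtain b where b: "(a, b) \<in> E" "\<beta> = b - b0" unfolding B_def Ea_def by blast
      have "(a, b) \<in> hpts q" using b E by auto
      then have e1: "b ^ q + b = a ^ (q + 1)" "b0 ^ q + b0 = a ^ (q + 1)" using Q by (simp_all add: hpts_def)
      have e: "(b - b0) ^ q + (b - b0) = (b ^ q + b) - (b0 ^ q + b0)"
        by (simp add: frobA_diff[OF h] algebra_simps)
      have "(b - b0) ^ q + (b - b0) = 0" unfolding e e1 by simp
      then show "\<beta> \<in> K" using b(2) unfolding K_def Kq_def by simp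
    qed
    have cB: "card B = card (Ea a)" unfolding B_def by (rule card_image) (simp add: inj_on_def)
    have SB: "Sn q (a, b0) s (sig \<beta> L)" if bB: "\<beta> \<in> B" for \<beta>
    proof -
      obtain b where b: "(a, b) \<in> E" "\<beta> = b - b0" using bB unfolding B_def Ea_def by blast
      have "\<beta> ^ q + \<beta> = 0" using BK bB by (auto simp: K_def Kq_def)
      from S_sig[OF h this S[OF b(1)]] show ?thesis using b(2) by simp
    qed
    have "Sn q (a, b0) (\<Sum>\<beta>\<in>B. s) (\<Prod>\<beta>\<in>B. sig \<beta> L)"
      by (rule S_prod) (simp_all add: SB)
    then have "Sn q (a, b0) (s * card (Ea a)) ((\<Prod>\<beta>\<in>B. sig \<beta> L) * (\<Prod>\<beta>\<in>K - B. sig \<beta> L))"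
      using cB by (intro S_mult_right) (simp add: mult.commute)
    moreover have "(\<Prod>\<beta>\<in>B. sig \<beta> L) * (\<Prod>\<beta>\<in>K - B. sig \<beta> L) = N"
      unfolding N_def using prod.subset_diff[OF BK finK, of "\<lambda>\<beta>. sig \<beta> L"] by (simp add: mult.commute)
    ultimately have "Sn q (a, b0) (s * card (Ea a)) r" using S_cong Nr by metis
    then have "Sn q (a, b0) (s * card (Ea a)) [:c0:]" using rc by simp
    from S_poly_dvd[OF h Q this] show ?thesis by simp
  qed
  have "s * card E = (\<Sum>a\<in>fst ` E. s * card (Ea a))"
  proof -
    have "E = (SIGMA a:fst ` E. Ea a)" unfolding Ea_def by force
    then have "card E = (\<Sum>a\<in>fst ` E. card (Ea a))"
      by (metis card_SigmaI finE finite_imageI finite)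
    then show ?thesis by (simp add: sum_distrib_left)
  qed
  also have "\<dots> \<le> (\<Sum>a\<in>fst ` E. order a c0)"
    using dv c00 by (intro sum_mono) (simp add: order_divides)
  also have "\<dots> = (\<Sum>a\<in>fst ` E \<inter> {x. poly c0 x = 0}. order a c0)"
    by (rule sum.mono_neutral_right) (auto simp: order_0I)
  also have "\<dots> \<le> (\<Sum>a | poly c0 a = 0. order a c0)"
    by (rule sum_mono2) (auto intro: poly_roots_finite[OF c00])
  also have "\<dots> \<le> degree c0" by (rule sum_order_le_degree[OF c00])
  finally show ?thesis using degc by linarith
qed


section \<open>Counting monomials\<close>

definition Mset :: "nat \<Rightarrow> nat \<Rightarrow> (nat \<times> nat) set" where
  "Mset q m = {(i, j). j < q \<and> hw q i j \<le> m}"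

lemma finite_Mset: "1 \<le> q \<Longrightarrow> finite (Mset q m)"
proof -
  assume q: "1 \<le> q"
  have "Mset q m \<subseteq> {..m} \<times> {..<q}"
  proof
    fix x assume "x \<in> Mset q m"
    then obtain i j where x: "x = (i, j)" "j < q" "hw q i j \<le> m" unfolding Mset_def by blast
    have "i \<le> i * q" using q by simp
    then have "i \<le> m" using x(3) unfolding hw_def by linarith
    then show "x \<in> {..m} \<times> {..<q}" using x by simp
  qed
  then show ?thesis by (rule finite_subset) simp
qed

lemma card_Mset:
  assumes q: "1 \<le> q"
  shows "m + 1 \<le> card (Mset q m) + q * (q - 1) div 2"
proof -
  define S where "S = {n. n \<le> m \<and> n mod q \<le> n div q}"
  define Gs where "Gs = {n::nat. n div q < n mod q}"
  have "S \<subseteq> (\<lambda>(i, j). hw q i j) ` Mset q m"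
  proof
    fix n assume n: "n \<in> S"
    define j where "j = n mod q"
    define i where "i = n div q - j"
    have jq: "j < q" unfolding j_def using q by simp
    have "hw q i j = n"
    proof -
      have "hw q i j = (i + j) * q + j" by (simp add: hw_def algebra_simps)
      also have "i + j = n div q" using n unfolding i_def j_def S_def by simp
      finally show ?thesis unfolding j_def by simp
    qed
    then show "n \<in> (\<lambda>(i, j). hw q i j) ` Mset q m"
      using n jq unfolding S_def Mset_def by (intro image_eqI[of _ _ "(i, j)"]) auto
  qed
  then have cS: "card S \<le> card (Mset q m)"
    using finite_Mset[OF q] by (meson card_image_le card_mono finite_imageI le_trans)
  define T where "T = {(d, r). d < r \<and> r < (q::nat)}"
  have "T = (\<lambda>(r, d). (d, r)) ` (SIGMA r:{..<q}. {..<r})" unfolding T_def by auto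
  then have "card T = card (SIGMA r:{..<q}. {..<r})" by (simp add: card_image inj_on_def)
  also have "\<dots> = (\<Sum>r<q. r)" by simp
  also have "\<dots> = (\<Sum>r\<in>{0..q - 1}. r)" using q by (intro sum.cong) auto
  also have "\<dots> = (q - 1) * Suc (q - 1) div 2" by (rule gauss_sum_nat)
  also have "\<dots> = q * (q - 1) div 2" using q by (simp add: mult.commute)
  finally have cT: "card T = q * (q - 1) div 2" .
  have finT: "finite T"
  proof -
    have "T \<subseteq> {..<q} \<times> {..<q}" unfolding T_def by auto
    then show ?thesis by (rule finite_subset) simp
  qed
  have "card ({..m} - S) \<le> card T"
  proof (rule card_inj_on_le[of "\<lambda>n. (n div q, n mod q)"])
    show "inj_on (\<lambda>n. (n div q, n mod q)) ({..m} - S)"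
      by (auto simp: inj_on_def) (metis div_mult_mod_eq)
    show "(\<lambda>n. (n div q, n mod q)) ` ({..m} - S) \<subseteq> T"
      unfolding T_def S_def using q by auto
  qed (rule finT)
  moreover have "card {..m} \<le> card S + card ({..m} - S)"
  proof -
    have "{..m} \<subseteq> S \<union> ({..m} - S)" by auto
    then have "card {..m} \<le> card (S \<union> ({..m} - S))" by (rule card_mono[rotated]) (simp add: S_def)
    also have "\<dots> \<le> card S + card ({..m} - S)" by (rule card_Un_le)
    finally show ?thesis .
  qed
  ultimately show ?thesis using cS cT by simp
qed

definition mk :: "nat \<Rightarrow> nat \<Rightarrow> (nat \<times> nat \<Rightarrow> 'a::comm_ring_1) \<Rightarrow> 'a bpoly" where
  "mk q m c = (\<Sum>x\<in>Mset q m. monom (monom (c x) (fst x)) (snd x))"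

lemma hcoeff_monom2: "hcoeff (monom (monom a i') j') i j = (if (i', j') = (i, j) then a else 0)"
  by (simp add: hcoeff_def)

lemma hcoeff_mk:
  assumes "1 \<le> q"
  shows "hcoeff (mk q m c) i j = (if (i, j) \<in> Mset q m then c (i, j) else 0)"
proof -
  have "hcoeff (mk q m c) i j = (\<Sum>x\<in>Mset q m. if x = (i, j) then c x else 0)"
    unfolding mk_def hcoeff_sum by (intro sum.cong refl) (auto simp: hcoeff_monom2)
  also have "\<dots> = (if (i, j) \<in> Mset q m then c (i, j) else 0)"
    using finite_Mset[OF assms] by (simp add: sum.delta')
  finally show ?thesis .
qed

lemma hcoeff_eqI: "(\<And>i j. hcoeff p i j = hcoeff r i j) \<Longrightarrow> p = r"
  unfolding hcoeff_def by (intro poly_eqI) blast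

lemma hcoeff_smult: "hcoeff (smult [:\<alpha>:] p) i j = \<alpha> * hcoeff p i (j :: nat)"
  by (simp add: hcoeff_def)

definition Vs :: "nat \<Rightarrow> nat \<Rightarrow> 'a::comm_ring_1 bpoly set" where
  "Vs q m = mk q m ` (Pi\<^sub>E (Mset q m) (\<lambda>_. UNIV))"

definition closedW :: "'a::comm_ring_1 bpoly set \<Rightarrow> bool" where
  "closedW W \<longleftrightarrow> (\<forall>f1\<in>W. \<forall>f2\<in>W. \<forall>\<alpha> \<beta>. smult [:\<alpha>:] f1 + smult [:\<beta>:] f2 \<in> W)"

lemma Vs_props:
  assumes q: "1 \<le> q" and p: "p \<in> Vs q m"
  shows "inR q p" "wt q p \<le> m"
proof -
  obtain c where c: "p = mk q m c" using p unfolding Vs_def by blast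
  have hc: "hcoeff p i j \<noteq> 0 \<Longrightarrow> (i, j) \<in> Mset q m" for i j
    unfolding c hcoeff_mk[OF q] by (auto split: if_splits)
  show "wt q p \<le> m" by (rule wt_le) (use hc in \<open>auto simp: Mset_def\<close>)
  show "inR q p"
  proof (cases "p = 0")
    case True then show ?thesis using q by (simp add: inR_def)
  next
    case False
    then have "coeff p (degree p) \<noteq> 0" by simp
    then obtain i where "hcoeff p i (degree p) \<noteq> 0" unfolding hcoeff_def using leading_coeff_0_iff by blast
    then have "(i, degree p) \<in> Mset q m" by (rule hc)
    then show ?thesis by (simp add: inR_def Mset_def)
  qed
qed

lemma card_Vs:
  assumes q: "1 \<le> q"
  shows "card (Vs q m :: 'a::{finite,comm_ring_1} bpoly set) = card (UNIV :: 'a set) ^ card (Mset q m)"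
proof -
  have inj: "inj_on (mk q m :: _ \<Rightarrow> 'a bpoly) (Pi\<^sub>E (Mset q m) (\<lambda>_. UNIV))"
  proof (rule inj_onI)
    fix c1 c2 :: "nat \<times> nat \<Rightarrow> 'a"
    assume c: "c1 \<in> Pi\<^sub>E (Mset q m) (\<lambda>_. UNIV)" "c2 \<in> Pi\<^sub>E (Mset q m) (\<lambda>_. UNIV)" "mk q m c1 = mk q m c2"
    show "c1 = c2"
    proof (rule ext)
      fix x
      show "c1 x = c2 x"
      proof (cases "x \<in> Mset q m")
        case True
        obtain i j where x: "x = (i, j)" by (cases x)
        have "hcoeff (mk q m c1) i j = hcoeff (mk q m c2) i j" using c(3) by simp
        then show ?thesis using True unfolding x hcoeff_mk[OF q] by simp
      next
        case False then show ?thesis using c(1,2) by (cases x) (simp add: PiE_def extensional_def)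
      qed
    qed
  qed
  have "card (Vs q m :: 'a bpoly set) = card (Pi\<^sub>E (Mset q m) (\<lambda>_. UNIV :: 'a set))"
    unfolding Vs_def by (rule card_image[OF inj])
  also have "\<dots> = card (UNIV :: 'a set) ^ card (Mset q m)"
    using finite_Mset[OF q] by (simp add: card_PiE)
  finally show ?thesis .
qed

lemma finite_Vs: "1 \<le> q \<Longrightarrow> finite (Vs q m :: 'a::{finite,comm_ring_1} bpoly set)"
  unfolding Vs_def by (intro finite_imageI finite_PiE finite_Mset) simp_all

lemma closed_Vs:
  assumes q: "1 \<le> q"
  shows "closedW (Vs q m :: 'a::comm_ring_1 bpoly set)"
  unfolding closedW_def
proof (intro ballI allI)
  fix f1 f2 :: "'a bpoly" and \<alpha> \<beta>
  assume "f1 \<in> Vs q m" "f2 \<in> Vs q m"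
  then obtain c1 c2 where c: "f1 = mk q m c1" "f2 = mk q m c2" unfolding Vs_def by blast
  define c where "c = restrict (\<lambda>x. \<alpha> * c1 x + \<beta> * c2 x) (Mset q m)"
  have "smult [:\<alpha>:] f1 + smult [:\<beta>:] f2 = mk q m c"
    by (rule hcoeff_eqI) (simp add: c hcoeff_smult hcoeff_mk[OF q] c_def)
  moreover have "c \<in> Pi\<^sub>E (Mset q m) (\<lambda>_. UNIV)" unfolding c_def by simp
  ultimately show "smult [:\<alpha>:] f1 + smult [:\<beta>:] f2 \<in> Vs q m" unfolding Vs_def by blast
qed

lemma closed_Int: "closedW A \<Longrightarrow> closedW B \<Longrightarrow> closedW (A \<inter> B)"
  unfolding closedW_def by blast

lemma smult_const_mult: "smult [:\<alpha>:] f = [:[:\<alpha>:]:] * f"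
  by simp

lemma Sn_comb: "Sn q P n f1 \<Longrightarrow> Sn q P n f2 \<Longrightarrow> Sn q P n (smult [:\<alpha>:] f1 + smult [:\<beta>:] f2)"
  unfolding smult_const_mult by (rule S_add[OF S_mult_left S_mult_left])

lemma closed_Sn: "closedW {F. Sn q P n F}"
  unfolding closedW_def using Sn_comb by blast

lemma closed_Sn_all: "closedW {F. \<forall>P\<in>E. Sn q P n F}"
  unfolding closedW_def using Sn_comb by blast

lemma ev_smult_const [simp]: "ev P (smult [:c:] p) = c * ev P p"
  by (simp add: ev_def)

lemma key_comb:
  fixes f f1 :: "'a::{finite,field} bpoly"
  assumes h: "hyp q TYPE('a)" and P: "P \<in> hpts q"
    and S1: "Sn q P n f1" and S: "Sn q P n f" and N1: "\<not> Sn q P (Suc n) f1"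
  shows "\<exists>c. Sn q P (Suc n) (f - smult [:c:] f1)"
proof -
  obtain g1 a1 where g1: "ev P g1 \<noteq> 0" "heq q (g1 * f1) (xa (fst P) ^ n * a1)" using S1 unfolding Sn_def by blast
  obtain g a where g: "ev P g \<noteq> 0" "heq q (g * f) (xa (fst P) ^ n * a)" using S unfolding Sn_def by blast
  have a1: "ev P a1 \<noteq> 0" using S_step[OF h P g1] N1 by blast
  define c where "c = (ev P g1 * ev P a) / (ev P g * ev P a1)"
  define x where "x = xa (fst P) ^ n"
  have "heq q (g1 * (g * f) - [:[:c:]:] * g * (g1 * f1)) (g1 * (x * a) - [:[:c:]:] * g * (x * a1))"
    unfolding x_def by (rule heq_diff[OF heq_mult[OF heq_refl g(2)] heq_mult[OF heq_refl g1(2)]])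
  moreover have "g1 * (g * f) - [:[:c:]:] * g * (g1 * f1) = (g * g1) * (f - smult [:c:] f1)"
    by (simp only: smult_const_mult right_diff_distrib mult_ac)
  moreover have "g1 * (x * a) - [:[:c:]:] * g * (x * a1) = x * (g1 * a - [:[:c:]:] * g * a1)"
    by (simp only: right_diff_distrib mult_ac)
  ultimately have e: "heq q ((g * g1) * (f - smult [:c:] f1)) (xa (fst P) ^ n * (g1 * a - [:[:c:]:] * g * a1))"
    unfolding x_def by simp
  have "ev P (g1 * a - [:[:c:]:] * g * a1) = ev P g1 * ev P a - c * ev P g * ev P a1" by simp
  also have "\<dots> = 0" using g(1) a1 by (simp add: c_def field_simps)
  finally have "ev P (g1 * a - [:[:c:]:] * g * a1) = 0" .
  moreover have "ev P (g * g1) \<noteq> 0" using g(1) g1(1) by simp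
  ultimately show ?thesis using S_step[OF h P _ e] by blast
qed

lemma step_card:
  fixes W :: "'a::{finite,field} bpoly set"
  assumes h: "hyp q TYPE('a)" and P: "P \<in> hpts q" and fin: "finite W" and cl: "closedW W"
    and sub: "\<And>F. F \<in> W \<Longrightarrow> Sn q P n F"
  shows "card W \<le> card (UNIV :: 'a set) * card (W \<inter> {F. Sn q P (Suc n) F})"
proof (cases "\<forall>F\<in>W. Sn q P (Suc n) F")
  case True
  then have "W \<inter> {F. Sn q P (Suc n) F} = W" by auto
  moreover have "card (UNIV :: 'a set) \<ge> 1" by (simp add: Suc_le_eq finite_UNIV_card_ge_0)
  ultimately show ?thesis by simp
next
  case False
  then obtain f1 where f1: "f1 \<in> W" "\<not> Sn q P (Suc n) f1" by blast
  define W' where "W' = W \<inter> {F. Sn q P (Suc n) F}"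
  have "W \<subseteq> (\<Union>c\<in>UNIV. (\<lambda>w. w + smult [:c:] f1) ` W')"
  proof
    fix f assume f: "f \<in> W"
    obtain c where c: "Sn q P (Suc n) (f - smult [:c:] f1)"
      using key_comb[OF h P sub[OF f1(1)] sub[OF f] f1(2)] by blast
    have "smult [:1:] f + smult [:- c:] f1 \<in> W" using cl f f1(1) unfolding closedW_def by blast
    moreover have "smult [:- c:] f1 = - smult [:c:] f1" by (rule poly_eqI) simp
    then have "smult [:1:] f + smult [:- c:] f1 = f - smult [:c:] f1"
      by (simp add: one_pCons[symmetric])
    ultimately have "f - smult [:c:] f1 \<in> W'" using c unfolding W'_def by simp
    then show "f \<in> (\<Union>c\<in>UNIV. (\<lambda>w. w + smult [:c:] f1) ` W')" by (intro UN_I[of c]) force+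
  qed
  then have "card W \<le> card (\<Union>c\<in>UNIV. (\<lambda>w. w + smult [:c:] f1) ` W')"
    by (intro card_mono) (simp_all add: W'_def fin)
  also have "\<dots> \<le> (\<Sum>c\<in>UNIV. card ((\<lambda>w. w + smult [:c:] f1) ` W'))" by (rule card_UN_le) simp
  also have "\<dots> \<le> (\<Sum>c\<in>(UNIV :: 'a set). card W')" by (intro sum_mono card_image_le) (simp add: W'_def fin)
  also have "\<dots> = card (UNIV :: 'a set) * card W'" by simp
  finally show ?thesis unfolding W'_def .
qed

lemma iter_card:
  fixes W :: "'a::{finite,field} bpoly set"
  assumes h: "hyp q TYPE('a)" and P: "P \<in> hpts q" and fin: "finite W" and cl: "closedW W"
  shows "card W \<le> card (UNIV :: 'a set) ^ n * card (W \<inter> {F. Sn q P n F})"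
proof (induction n)
  case 0
  then show ?case by (simp add: S_0)
next
  case (Suc n)
  define Wn where "Wn = W \<inter> {F. Sn q P n F}"
  have "card Wn \<le> card (UNIV :: 'a set) * card (Wn \<inter> {F. Sn q P (Suc n) F})"
    by (rule step_card[OF h P]) (simp_all add: Wn_def fin closed_Int[OF cl closed_Sn])
  moreover have "Wn \<inter> {F. Sn q P (Suc n) F} = W \<inter> {F. Sn q P (Suc n) F}"
    unfolding Wn_def using S_mono[of n "Suc n" q P] by auto
  ultimately have "card Wn \<le> card (UNIV :: 'a set) * card (W \<inter> {F. Sn q P (Suc n) F})" by simp
  then have "card (UNIV :: 'a set) ^ n * card Wn \<le> card (UNIV :: 'a set) ^ Suc n * card (W \<inter> {F. Sn q P (Suc n) F})"
    by (simp add: mult.assoc)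
  then show ?case using Suc.IH unfolding Wn_def by linarith
qed

lemma multi_card:
  fixes W :: "'a::{finite,field} bpoly set"
  assumes h: "hyp q TYPE('a)" and E: "finite E" "E \<subseteq> hpts q" and fin: "finite W" and cl: "closedW W"
  shows "card W \<le> card (UNIV :: 'a set) ^ (s * card E) * card (W \<inter> {F. \<forall>P\<in>E. Sn q P s F})"
  using E
proof (induction E rule: finite_induct)
  case empty
  then show ?case by simp
next
  case (insert P E)
  define W' where "W' = W \<inter> {F. \<forall>P\<in>E. Sn q P s F}"
  have "card W' \<le> card (UNIV :: 'a set) ^ s * card (W' \<inter> {F. Sn q P s F})"
    by (rule iter_card[OF h]) (use insert in \<open>simp_all add: W'_def fin closed_Int[OF cl closed_Sn_all]\<close>)
  moreover have "W' \<inter> {F. Sn q P s F} = W \<inter> {F. \<forall>P\<in>insert P E. Sn q P s F}" unfolding W'_def by auto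
  ultimately have "card W' \<le> card (UNIV :: 'a set) ^ s * card (W \<inter> {F. \<forall>P\<in>insert P E. Sn q P s F})" by simp
  moreover have "card W \<le> card (UNIV :: 'a set) ^ (s * card E) * card W'" using insert unfolding W'_def by simp
  ultimately have "card W \<le> card (UNIV :: 'a set) ^ (s * card E) * (card (UNIV :: 'a set) ^ s * card (W \<inter> {F. \<forall>P\<in>insert P E. Sn q P s F}))"
    by (meson le_trans mult_le_mono2)
  also have "\<dots> = card (UNIV :: 'a set) ^ (s * card (insert P E)) * card (W \<inter> {F. \<forall>P\<in>insert P E. Sn q P s F})"
    using insert(1,2) by (simp add: power_add mult.assoc)
  finally show ?case .
qed

lemma upper_bound:
  fixes E :: "('a::{finite,field} \<times> 'a) set"
  assumes h: "hyp q TYPE('a)" and E: "E \<subseteq> hpts q"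
  shows "\<exists>L'::'a bpoly. inR q L' \<and> L' \<noteq> 0 \<and> (\<forall>P\<in>E. Sn q P s L') \<and> wt q L' \<le> s * card E + q * (q - 1) div 2"
proof -
  have q: "2 \<le> q" using hyp_q[OF h] .
  then have q1: "1 \<le> q" by simp
  define m where "m = s * card E + q * (q - 1) div 2"
  define V where "V = (Vs q m :: 'a bpoly set)"
  define Z where "Z = V \<inter> {F. \<forall>P\<in>E. Sn q P s F}"
  define N where "N = card (UNIV :: 'a set)"
  have "(2::nat) ^ 2 \<le> q ^ 2" using q by (rule power_mono) simp
  then have N2: "2 \<le> N" unfolding N_def using hyp_card[OF h] by simp
  have cM: "s * card E + 1 \<le> card (Mset q m)" using card_Mset[OF q1, of m] unfolding m_def by linarith
  have "N ^ (s * card E) * N = N ^ (s * card E + 1)" by simp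
  also have "\<dots> \<le> N ^ card (Mset q m)" using cM N2 by (intro power_increasing) simp_all
  also have "\<dots> = card V" unfolding V_def N_def by (rule card_Vs[OF q1, symmetric])
  also have "\<dots> \<le> N ^ (s * card E) * card Z" unfolding Z_def V_def N_def
    by (rule multi_card[OF h _ E finite_Vs[OF q1] closed_Vs[OF q1]]) simp
  finally have "N ^ (s * card E) * N \<le> N ^ (s * card E) * card Z" .
  then have "N \<le> card Z" using N2 by simp
  then have "2 \<le> card Z" using N2 by linarith
  then obtain z where z: "z \<in> Z" "z \<noteq> 0"
  proof -
    assume r: "\<And>z. z \<in> Z \<Longrightarrow> z \<noteq> 0 \<Longrightarrow> thesis"
    show thesis
    proof (rule ccontr)
      assume "\<not> thesis"
      then have "Z \<subseteq> {0}" using r by blast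
      then have "card Z \<le> card {0 :: 'a bpoly}" by (rule card_mono[rotated]) simp
      then have "card Z \<le> 1" by simp
      then show False using \<open>2 \<le> card Z\<close> by simp
    qed
  qed
  have "z \<in> V" using z unfolding Z_def by simp
  then have zV: "z \<in> Vs q m" unfolding V_def .
  have "inR q z" by (rule Vs_props(1)[OF q1 zV])
  moreover have "wt q z \<le> m" by (rule Vs_props(2)[OF q1 zV])
  moreover have "\<forall>P\<in>E. Sn q P s z" using z unfolding Z_def by simp
  ultimately show ?thesis using z(2) unfolding m_def by blast
qed


definition Box :: "nat \<Rightarrow> (nat \<Rightarrow> nat) \<Rightarrow> (nat \<Rightarrow> nat) set" where
  "Box h j = {i \<in> mvecs h. \<forall>\<mu><h. i \<mu> \<le> j \<mu>}"

definition ext0 :: "nat \<Rightarrow> (nat \<Rightarrow> nat) \<Rightarrow> nat \<Rightarrow> nat" where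
  "ext0 h g = (\<lambda>\<mu>. if \<mu> < h then g \<mu> else 0)"

lemma Box_image: "Box h j = ext0 h ` (Pi\<^sub>E {..<h} (\<lambda>\<mu>. {..j \<mu>}))"
proof
  show "Box h j \<subseteq> ext0 h ` (Pi\<^sub>E {..<h} (\<lambda>\<mu>. {..j \<mu>}))"
  proof
    fix i assume i: "i \<in> Box h j"
    have "i = ext0 h (restrict i {..<h})" using i unfolding Box_def mvecs_def ext0_def by (auto simp: fun_eq_iff)
    moreover have "restrict i {..<h} \<in> Pi\<^sub>E {..<h} (\<lambda>\<mu>. {..j \<mu>})" using i unfolding Box_def by auto
    ultimately show "i \<in> ext0 h ` (Pi\<^sub>E {..<h} (\<lambda>\<mu>. {..j \<mu>}))" by blast
  qed
  show "ext0 h ` (Pi\<^sub>E {..<h} (\<lambda>\<mu>. {..j \<mu>})) \<subseteq> Box h j"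
  proof
    fix i assume "i \<in> ext0 h ` (Pi\<^sub>E {..<h} (\<lambda>\<mu>. {..j \<mu>}))"
    then obtain g where g: "g \<in> Pi\<^sub>E {..<h} (\<lambda>\<mu>. {..j \<mu>})" "i = ext0 h g" by blast
    have "g \<mu> \<le> j \<mu>" if "\<mu> < h" for \<mu> using g(1) that by (simp add: PiE_iff)
    then show "i \<in> Box h j" unfolding g(2) Box_def mvecs_def ext0_def by simp
  qed
qed

lemma finite_Box: "finite (Box h j)"
  unfolding Box_image by (intro finite_imageI finite_PiE) simp_all

lemma multinom:
  fixes x y :: "nat \<Rightarrow> 'a::comm_ring_1 bpoly"
  shows "mpow h (\<lambda>\<mu>. x \<mu> + y \<mu>) j =
    (\<Sum>i\<in>Box h j. of_nat (mbinom h j i) * mpow h x (\<lambda>\<mu>. j \<mu> - i \<mu>) * mpow h y i)"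
proof -
  have "mpow h (\<lambda>\<mu>. x \<mu> + y \<mu>) j = (\<Prod>\<mu><h. \<Sum>k\<le>j \<mu>. of_nat (j \<mu> choose k) * y \<mu> ^ k * x \<mu> ^ (j \<mu> - k))"
    unfolding mpow_def by (intro prod.cong refl) (subst add.commute, rule binomial_ring)
  also have "\<dots> = (\<Sum>g\<in>Pi\<^sub>E {..<h} (\<lambda>\<mu>. {..j \<mu>}). \<Prod>\<mu><h. of_nat (j \<mu> choose g \<mu>) * y \<mu> ^ g \<mu> * x \<mu> ^ (j \<mu> - g \<mu>))"
    by (rule prod_sum_PiE) simp_all
  also have "\<dots> = (\<Sum>i\<in>Box h j. \<Prod>\<mu><h. of_nat (j \<mu> choose i \<mu>) * y \<mu> ^ i \<mu> * x \<mu> ^ (j \<mu> - i \<mu>))"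
  proof (rule sum.reindex_bij_witness[of _ "\<lambda>i. restrict i {..<h}" "ext0 h"])
    fix i assume "i \<in> Box h j"
    then show "ext0 h (restrict i {..<h}) = i" unfolding Box_def mvecs_def ext0_def by (auto simp: fun_eq_iff)
  next
    fix i assume "i \<in> Box h j"
    then show "restrict i {..<h} \<in> Pi\<^sub>E {..<h} (\<lambda>\<mu>. {..j \<mu>})" unfolding Box_def by auto
  next
    fix g assume "g \<in> Pi\<^sub>E {..<h} (\<lambda>\<mu>. {..j \<mu>})"
    then show "restrict (ext0 h g) {..<h} = g" unfolding ext0_def by (auto simp: fun_eq_iff PiE_def extensional_def)
  next
    fix g assume "g \<in> Pi\<^sub>E {..<h} (\<lambda>\<mu>. {..j \<mu>})"
    then show "ext0 h g \<in> Box h j" unfolding Box_image by blast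
  next
    fix g assume "g \<in> Pi\<^sub>E {..<h} (\<lambda>\<mu>. {..j \<mu>})"
    then show "(\<Prod>\<mu><h. of_nat (j \<mu> choose ext0 h g \<mu>) * y \<mu> ^ ext0 h g \<mu> * x \<mu> ^ (j \<mu> - ext0 h g \<mu>)) =
               (\<Prod>\<mu><h. of_nat (j \<mu> choose g \<mu>) * y \<mu> ^ g \<mu> * x \<mu> ^ (j \<mu> - g \<mu>))"
      unfolding ext0_def by (intro prod.cong refl) simp
  qed
  also have "\<dots> = (\<Sum>i\<in>Box h j. of_nat (mbinom h j i) * mpow h x (\<lambda>\<mu>. j \<mu> - i \<mu>) * mpow h y i)"
    unfolding mpow_def mbinom_def by (intro sum.cong refl) (simp add: prod.distrib of_nat_prod mult_ac)
  finally show ?thesis .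
qed

lemma mbinom_zero:
  assumes "\<mu> < h" "j \<mu> < i \<mu>"
  shows "mbinom h j i = 0"
  unfolding mbinom_def using assms by (intro prod_zero) auto

lemma Acoef_zero:
  assumes "i \<in> mvecs h" "i \<notin> Box h j"
  shows "Acoef q h Rv i j = 0"
proof -
  obtain \<mu> where "\<mu> < h" "j \<mu> < i \<mu>" using assms unfolding Box_def by (auto simp: not_le)
  then show ?thesis by (simp add: Acoef_def mbinom_zero)
qed

lemma mabs_mono: "\<forall>\<mu><h. i \<mu> \<le> j \<mu> \<Longrightarrow> mabs h i \<le> mabs h j"
  unfolding mabs_def by (intro sum_mono) auto

lemma finite_Iset: "finite (Iset h s)"
proof -
  have "Iset h s \<subseteq> Box h (\<lambda>_. s)"
  proof
    fix i assume i: "i \<in> Iset h s"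
    have "i \<mu> \<le> s" if "\<mu> < h" for \<mu>
    proof -
      have "i \<mu> \<le> mabs h i" unfolding mabs_def using that by (intro member_le_sum) auto
      then show ?thesis using i unfolding Iset_def by simp
    qed
    then show "i \<in> Box h (\<lambda>_. s)" using i unfolding Iset_def Box_def by auto
  qed
  then show ?thesis using finite_Box by (rule finite_subset)
qed


theorem theorem3:
  fixes q h s l :: nat and mH :: int
    and f Rv :: "nat \<Rightarrow> 'a::{finite,field} bpoly"
    and e :: "nat \<Rightarrow> 'a \<times> 'a \<Rightarrow> 'a"
    and Lam :: "'a bpoly"
    and Omega :: "(nat \<Rightarrow> nat) \<Rightarrow> 'a bpoly"
  assumes q_pp: "\<exists>p k. prime p \<and> 0 < k \<and> q = p ^ k"
    and card_F: "card (UNIV :: 'a set) = q ^ 2"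
    and h_pos: "1 \<le> h"
    and mH_lo: "2 * (hgenus q - 1) < mH" and mH_hi: "mH < int (q ^ 3)"
    and f_L: "\<forall>\<mu><h. inL q mH (f \<mu>)"
    and R_R: "\<forall>\<mu><h. inR q (Rv \<mu>) \<and> (Rv \<mu> = 0 \<or> degH q (Rv \<mu>) < int (q ^ 3) + 2 * hgenus q)"
    and R_interp: "\<forall>\<mu><h. \<forall>P\<in>hpts q. evalH (Rv \<mu>) P = evalH (f \<mu>) P + e \<mu> P"
    and s_pos: "1 \<le> s" and s_le_l: "s \<le> l"
    and Lam_R: "inR q Lam" and Lam_monic: "monicH q Lam"
    and Lam_van: "\<forall>P\<in>{P \<in> hpts q. \<exists>\<mu><h. e \<mu> P \<noteq> 0}. val_ge q P s Lam"
    and Lam_min: "\<forall>L'. inR q L' \<and> L' \<noteq> 0 \<and>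
                        (\<forall>P\<in>{P \<in> hpts q. \<exists>\<mu><h. e \<mu> P \<noteq> 0}. val_ge q P s L')
                        \<longrightarrow> degH q Lam \<le> degH q L'"
    and Omega_R: "\<forall>i\<in>Iset h s. inR q (Omega i)"
    and Omega_deg: "\<forall>i\<in>Iset h s. Omega i \<noteq> 0 \<longrightarrow>
                      degH q (Omega i) \<le> degH q Lam + int (mabs h i) * (2 * hgenus q - 1)"
    and Omega_eq: "\<forall>i\<in>Iset h s.
                     heq q (Lam * mpow h (\<lambda>\<mu>. f \<mu> - Rv \<mu>) i) (Gp q ^ mabs h i * Omega i)"
  shows "problem1_solution q h s l mH Rv Omega (\<lambda>j. hred q (Lam * mpow h f j))
         \<and> degH q (Omega (\<lambda>_. 0)) = degH q Lam
         \<and> int s * int (card {P \<in> hpts q. \<exists>\<mu><h. e \<mu> P \<noteq> 0}) \<le> degH q Lam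
         \<and> degH q Lam \<le> int s * int (card {P \<in> hpts q. \<exists>\<mu><h. e \<mu> P \<noteq> 0}) + hgenus q"
proof -
  have h: "hyp q TYPE('a)" by (rule hypI[OF q_pp card_F])
  have q: "2 \<le> q" by (rule hyp_q[OF h])
  define E where "E = {P \<in> hpts q. \<exists>\<mu><h. e \<mu> P \<noteq> 0}"
  have EH: "E \<subseteq> hpts q" unfolding E_def by auto
  have Lam0: "Lam \<noteq> 0" using Lam_monic by (simp add: monicH_def)
  define z0 where "z0 = (\<lambda>_::nat. 0::nat)"
  have z0I: "z0 \<in> Iset h s" using s_pos by (simp add: z0_def Iset_def mvecs_def mabs_def)
  have Om0: "Omega z0 = Lam"
  proof -
    have "heq q (Lam * mpow h (\<lambda>\<mu>. f \<mu> - Rv \<mu>) z0) (Gp q ^ mabs h z0 * Omega z0)"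
      using Omega_eq z0I by blast
    then have "heq q Lam (Omega z0)" by (simp add: z0_def mpow_def mabs_def)
    then show ?thesis using red_unique[OF q Omega_R[rule_format, OF z0I] Lam_R] heq_sym by blast
  qed
  have Om0': "Omega (\<lambda>_. 0) = Lam" using Om0 by (simp add: z0_def)
  have SLam: "Sn q P s Lam" if "P \<in> E" for P
    using val_ge_S[OF h _ Lam_van[rule_format, OF that[unfolded E_def]]] that EH by blast
  have K: "\<exists>t. heq q (Lam * mpow h (\<lambda>\<mu>. f \<mu> - Rv \<mu>) i) (Gp q ^ s * t)"
    if i: "i \<in> mvecs h" "s \<le> mabs h i" for i
  proof (rule VG[OF h])
    fix P :: "'a \<times> 'a" assume P: "P \<in> hpts q"
    show "Sn q P s (Lam * mpow h (\<lambda>\<mu>. f \<mu> - Rv \<mu>) i)"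
    proof (cases "P \<in> E")
      case True then show ?thesis using SLam S_mult_right by blast
    next
      case False
      then have e0: "\<forall>\<mu><h. e \<mu> P = 0" using P unfolding E_def by auto
      have "Sn q P (i \<mu>) ((f \<mu> - Rv \<mu>) ^ i \<mu>)" if mu: "\<mu> < h" for \<mu>
      proof -
        have "ev P (f \<mu> - Rv \<mu>) = 0" using R_interp mu P e0 by (simp add: evalH_ev)
        then have "Sn q P 1 (f \<mu> - Rv \<mu>)" by (rule S_vanish[OF h P])
        from S_power[OF this, of "i \<mu>"] show ?thesis by simp
      qed
      then have "Sn q P (\<Sum>\<mu><h. i \<mu>) (\<Prod>\<mu><h. (f \<mu> - Rv \<mu>) ^ i \<mu>)" by (intro S_prod) simp_all
      then have "Sn q P (mabs h i) (mpow h (\<lambda>\<mu>. f \<mu> - Rv \<mu>) i)" by (simp add: mabs_def mpow_def)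
      then have "Sn q P s (mpow h (\<lambda>\<mu>. f \<mu> - Rv \<mu>) i)" using i(2) by (rule S_mono[rotated])
      then show ?thesis by (rule S_mult_left)
    qed
  qed
  have expand: "Lam * mpow h f j = (\<Sum>i\<in>Box h j. of_nat (mbinom h j i) * mpow h Rv (\<lambda>\<mu>. j \<mu> - i \<mu>) *
                  (Lam * mpow h (\<lambda>\<mu>. f \<mu> - Rv \<mu>) i))" for j
  proof -
    have "mpow h f j = mpow h (\<lambda>\<mu>. Rv \<mu> + (f \<mu> - Rv \<mu>)) j" by simp
    also have "\<dots> = (\<Sum>i\<in>Box h j. of_nat (mbinom h j i) * mpow h Rv (\<lambda>\<mu>. j \<mu> - i \<mu>) * mpow h (\<lambda>\<mu>. f \<mu> - Rv \<mu>) i)"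
      by (rule multinom)
    finally show ?thesis by (simp add: sum_distrib_left mult_ac)
  qed
  have termI: "heq q (of_nat (mbinom h j i) * mpow h Rv (\<lambda>\<mu>. j \<mu> - i \<mu>) * (Lam * mpow h (\<lambda>\<mu>. f \<mu> - Rv \<mu>) i))
                     (Omega i * Acoef q h Rv i j)" if "i \<in> Iset h s" for i j
  proof -
    have "heq q (of_nat (mbinom h j i) * mpow h Rv (\<lambda>\<mu>. j \<mu> - i \<mu>) * (Lam * mpow h (\<lambda>\<mu>. f \<mu> - Rv \<mu>) i))
                (of_nat (mbinom h j i) * mpow h Rv (\<lambda>\<mu>. j \<mu> - i \<mu>) * (Gp q ^ mabs h i * Omega i))"
      by (rule heq_mult[OF heq_refl]) (use Omega_eq that in blast)
    then show ?thesis by (simp add: Acoef_def mult_ac)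
  qed
  have sumI: "(\<Sum>i\<in>Box h j \<inter> Iset h s. Omega i * Acoef q h Rv i j) = (\<Sum>i\<in>Iset h s. Omega i * Acoef q h Rv i j)"
    if "j \<in> mvecs h" for j
  proof (rule sum.mono_neutral_left)
    show "finite (Iset h s)" by (rule finite_Iset)
    show "Box h j \<inter> Iset h s \<subseteq> Iset h s" by blast
    show "\<forall>i\<in>Iset h s - Box h j \<inter> Iset h s. Omega i * Acoef q h Rv i j = 0"
      using Acoef_zero[of _ h j q Rv] by (auto simp: Iset_def)
  qed
  have congr: "\<exists>t. heq q (hred q (Lam * mpow h f j)) ((\<Sum>i\<in>Iset h s. Omega i * Acoef q h Rv i j) + Gp q ^ s * t)"
    if j: "j \<in> mvecs h" for j
  proof -
    define T where "T i = of_nat (mbinom h j i) * mpow h Rv (\<lambda>\<mu>. j \<mu> - i \<mu>) * (Lam * mpow h (\<lambda>\<mu>. f \<mu> - Rv \<mu>) i)" for i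
    have "\<forall>i\<in>Box h j - Iset h s. \<exists>t. heq q (Lam * mpow h (\<lambda>\<mu>. f \<mu> - Rv \<mu>) i) (Gp q ^ s * t)"
      using K by (auto simp: Box_def Iset_def not_less)
    then obtain tt where tt: "\<And>i. i \<in> Box h j - Iset h s \<Longrightarrow> heq q (Lam * mpow h (\<lambda>\<mu>. f \<mu> - Rv \<mu>) i) (Gp q ^ s * tt i)"
      by metis
    define Z where "Z = (\<Sum>i\<in>Box h j - Iset h s. of_nat (mbinom h j i) * mpow h Rv (\<lambda>\<mu>. j \<mu> - i \<mu>) * tt i)"
    have A: "Lam * mpow h f j = (\<Sum>i\<in>Box h j \<inter> Iset h s. T i) + (\<Sum>i\<in>Box h j - Iset h s. T i)"
      unfolding expand T_def by (rule sum.Int_Diff[OF finite_Box])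
    have h1: "heq q (\<Sum>i\<in>Box h j \<inter> Iset h s. T i) (\<Sum>i\<in>Box h j \<inter> Iset h s. Omega i * Acoef q h Rv i j)"
      unfolding T_def by (rule heq_sum) (use termI in blast)
    have h2: "heq q (\<Sum>i\<in>Box h j - Iset h s. T i)
        (\<Sum>i\<in>Box h j - Iset h s. of_nat (mbinom h j i) * mpow h Rv (\<lambda>\<mu>. j \<mu> - i \<mu>) * (Gp q ^ s * tt i))"
      unfolding T_def by (rule heq_sum) (rule heq_mult[OF heq_refl tt])
    have e2: "(\<Sum>i\<in>Box h j - Iset h s. of_nat (mbinom h j i) * mpow h Rv (\<lambda>\<mu>. j \<mu> - i \<mu>) * (Gp q ^ s * tt i)) =
        Gp q ^ s * Z"
      unfolding Z_def sum_distrib_left by (intro sum.cong refl) (rule mult.left_commute)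
    have "heq q (Lam * mpow h f j) ((\<Sum>i\<in>Iset h s. Omega i * Acoef q h Rv i j) + Gp q ^ s * Z)"
      unfolding A using heq_add[OF h1 h2[unfolded e2]] unfolding sumI[OF j] .
    then show ?thesis using heq_trans[OF heq_sym[OF hred_props(2)[OF q]]] by blast
  qed
  have congr_small: "heq q (hred q (Lam * mpow h f j)) (\<Sum>i\<in>Iset h s. Omega i * Acoef q h Rv i j)"
    if j: "j \<in> mvecs h" "mabs h j < s" for j
  proof -
    have BI: "Box h j \<subseteq> Iset h s"
    proof
      fix i assume i: "i \<in> Box h j"
      then have "mabs h i \<le> mabs h j" unfolding Box_def by (intro mabs_mono) simp
      then show "i \<in> Iset h s" using i j(2) unfolding Box_def Iset_def by simp
    qed
    have "heq q (Lam * mpow h f j) (\<Sum>i\<in>Box h j. Omega i * Acoef q h Rv i j)"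
      unfolding expand by (rule heq_sum) (use termI BI in blast)
    moreover have "Box h j \<inter> Iset h s = Box h j" using BI by blast
    ultimately have "heq q (Lam * mpow h f j) (\<Sum>i\<in>Iset h s. Omega i * Acoef q h Rv i j)"
      using sumI[OF j(1)] by simp
    then show ?thesis using heq_trans[OF heq_sym[OF hred_props(2)[OF q]]] by blast
  qed
  have g1: "1 \<le> hgenus q"
  proof -
    obtain k where k: "q = k + 2" using q by (metis add.commute le_Suc_ex)
    have "2 \<le> q * (q - 1)" unfolding k by (simp add: algebra_simps)
    then have "2 div 2 \<le> q * (q - 1) div 2" by (rule div_le_mono)
    then show ?thesis unfolding hgenus_def by simp
  qed
  have "2 * hgenus q - 2 < mH" using mH_lo by (simp add: algebra_simps)
  then have mH0: "0 \<le> mH" using g1 by linarith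
  have wf: "int (wt q (f \<mu>)) \<le> mH" if "\<mu> < h" for \<mu>
  proof (cases "f \<mu> = 0")
    case True then show ?thesis using mH0 by simp
  next
    case False
    then have "degH q (f \<mu>) \<le> mH" using f_L that unfolding inL_def by blast
    then show ?thesis using degH_wt[OF False] by simp
  qed
  have psi_deg: "degH q (hred q (Lam * mpow h f j)) - int (mabs h j) * mH \<le> degH q Lam"
    if nz: "hred q (Lam * mpow h f j) \<noteq> 0" for j
  proof -
    have "wt q (mpow h f j) \<le> (\<Sum>\<mu><h. wt q (f \<mu> ^ j \<mu>))" unfolding mpow_def by (rule wt_prod)
    also have "\<dots> \<le> (\<Sum>\<mu><h. j \<mu> * wt q (f \<mu>))" by (intro sum_mono wt_power)
    finally have "int (wt q (mpow h f j)) \<le> int (\<Sum>\<mu><h. j \<mu> * wt q (f \<mu>))" by (simp only: of_nat_le_iff)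
    also have "\<dots> = (\<Sum>\<mu><h. int (j \<mu>) * int (wt q (f \<mu>)))" by (simp add: of_nat_sum)
    also have "\<dots> \<le> (\<Sum>\<mu><h. int (j \<mu>) * mH)" by (intro sum_mono mult_left_mono wf) simp_all
    also have "\<dots> = int (mabs h j) * mH" by (simp add: mabs_def sum_distrib_right of_nat_sum)
    finally have 1: "int (wt q (mpow h f j)) \<le> int (mabs h j) * mH" .
    have "wt q (hred q (Lam * mpow h f j)) \<le> wt q Lam + wt q (mpow h f j)"
      using hred_wt[OF q, of "Lam * mpow h f j"] wt_mult[of q Lam "mpow h f j"] by linarith
    then have "int (wt q (hred q (Lam * mpow h f j))) \<le> int (wt q Lam) + int (wt q (mpow h f j))" by linarith
    then show ?thesis using 1 degH_wt[OF nz, of q] degH_wt[OF Lam0, of q] by linarith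
  qed
  have lower: "s * card E \<le> wt q Lam" using lower_bound[OF h Lam_R Lam0 EH SLam] by simp
  obtain L' where L': "inR q L'" "L' \<noteq> 0" "\<forall>P\<in>E. Sn q P s L'" "wt q L' \<le> s * card E + q * (q - 1) div 2"
    using upper_bound[OF h EH, of s] by blast
  have "degH q Lam \<le> degH q L'"
    using Lam_min L'(1,2,3) S_val_ge unfolding E_def by blast
  then have upper: "degH q Lam \<le> int (s * card E) + hgenus q"
    using L'(4) degH_wt[OF L'(2), of q] unfolding hgenus_def by linarith
  show ?thesis
    unfolding problem1_solution_def E_def[symmetric] Om0'
  proof (intro conjI ballI impI)
    show "\<And>i. i \<in> Iset h s \<Longrightarrow> inR q (Omega i)" using Omega_R by blast
    show "\<And>j. j \<in> Jset h l \<Longrightarrow> inR q (hred q (Lam * mpow h f j))" using hred_props(1)[OF q] by blast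
    show "monicH q Lam" by (rule Lam_monic)
    show "\<And>j. j \<in> Jset h l \<Longrightarrow> mabs h j < s \<Longrightarrow> heq q (hred q (Lam * mpow h f j)) (\<Sum>i\<in>Iset h s. Omega i * Acoef q h Rv i j)"
      using congr_small unfolding Jset_def by blast
    show "\<And>j. j \<in> Jset h l \<Longrightarrow> s \<le> mabs h j \<Longrightarrow> \<exists>t. heq q (hred q (Lam * mpow h f j)) ((\<Sum>i\<in>Iset h s. Omega i * Acoef q h Rv i j) + Gp q ^ s * t)"
      using congr unfolding Jset_def by blast
    show "\<And>i. i \<in> Iset h s \<Longrightarrow> Omega i \<noteq> 0 \<Longrightarrow> degH q (Omega i) - int (mabs h i) * (2 * hgenus q - 1) \<le> degH q Lam"
      using Omega_deg by fastforce
    show "\<And>j. j \<in> Jset h l \<Longrightarrow> hred q (Lam * mpow h f j) \<noteq> 0 \<Longrightarrow> degH q (hred q (Lam * mpow h f j)) - int (mabs h j) * mH \<le> degH q Lam"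
      using psi_deg by blast
    show "degH q Lam = degH q Lam" ..
    show "int s * int (card E) \<le> degH q Lam" using lower degH_wt[OF Lam0, of q] by (simp flip: of_nat_mult)
    show "degH q Lam \<le> int s * int (card E) + hgenus q" using upper by simp
  qed
qed


end
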